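(* Let $(L,S,\alpha,\beta)$ be a feasible point of the SDP (RS) built from the data $D_\Delta=D+\Delta$, and let $K=F_K(L,D_\Delta)=U_\Delta L(X_\Delta L)^{-1}$. (i) If $\Delta=0$, then $\mathcal{J}(K)\le J_{\rm LQR}$ (in particular $A+BK$ is Schur). (ii) For every $\Delta$ with $\|\Delta\|_{\max}\le\epsilon$, the closed-loop matrix $A+BK$ is Schur stable, $\rho(A+BK)<1$.
   Context: $A\in\mathbb{R}^{n\times n}$, $B\in\mathbb{R}^{n\times m}$ unknown; clean data $D=[Z^{\sf T}\ X^{\sf T}\ U^{\sf T}]^{\sf T}$, $Z,X\in\mathbb{R}^{n\times T}$, $U\in\mathbb{R}^{m\times T}$ with $Z=AX+BU$. Perturbation $\Delta\in\mathbb{R}^{(2n+m)\times T}$, $D_\Delta=D+\Delta=[Z_\Delta^{\sf T}\ X_\Delta^{\sf T}\ U_\Delta^{\sf T}]^{\sf T}$; $\|\Delta\|_{\max}$ is the largest absolute entry; $\epsilon>0$, $J_{\rm LQR}>0$. $Q\succeq0$, $R\succ0$ with symmetric positive definite square root $V$. LQR cost: for $K$ with $A+BK$ Schur, $\mathcal{J}(K)=\sum_{i=1}^n\sum_{t\ge0}(x_t^{\sf T}Qx_t+u_t^{\sf T}Ru_t)$ along $x_{t+1}=Ax_t+Bu_t$, $u_t=Kx_t$, $x_0=e_i$ (equivalently ${\rm tr}((Q+K^{\sf T}RK)P^\star)$ with $P^\star=(A+BK)P^\star(A+BK)^{\sf T}+I$); $\mathcal{J}(K)=+\infty$ if $A+BK$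 is not Schur. Define $F(L,S,D_\Delta)={\rm diag}\Big(\begin{bmatrix}S & VU_\Delta L\\ \ast & X_\Delta L\end{bmatrix},\begin{bmatrix}X_\Delta L-I_n & Z_\Delta L\\ \ast & X_\Delta L\end{bmatrix}\Big)$. The SDP (RS) in variables $L\in\mathbb{R}^{T\times n}$, $S\in\mathbb{R}^{m\times m}$, $\alpha,\beta\in\mathbb{R}$ is the feasibility problem: ${\rm tr}(QX_\Delta L)+{\rm tr}(S)\le J_{\rm LQR}$; $F(L,S,D_\Delta)\succeq0$; $$\begin{bmatrix}X_\Delta L-\beta I_n & 0_{n,n} & 0_{n,m} & 0_{n,n}\\ 0_{n,n} & -X_\Delta L & -L^{\sf T}U_\Delta^{\sf T} & 0_{n,n}\\ 0_{m,n} & \ast & 0_{m,m} & U_\Delta L\\ 0_{n,n} & 0_{n,n} & \ast & X_\Delta L\end{bmatrix}-\alpha N_\Delta\succeq0;\quad \alpha\ge0,\ \beta\ge1,$$ where $N_\Delta={\rm diag}\Big(\bar D_\Delta^{\sf T}\begin{bmatrix}\epsilon^2(2n+m)T\,I_{2n+m} & 0\\ 0 & -I_T\end{bmatrix}\bar D_\Delta,\ 0_{n,n}\Big)$ and $\bar D_\Delta=\begin{bmatrix}I_{2n+m}\\ [Z_\Delta^{\sf T}\ \ -X_\Delta^{\sf T}\ \ -U_\Delta^{\sf T}]\end{bmatrix}\in\mathbb{R}^{(2n+m+T)\times(2n+m)}$. In these matrix inequalities, $\ast$ denotes the block determined by symmetry, and $M\succeq0$ requires $M$ to be symmetric (in particular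 $X_\Delta L$ and $S$ are symmetric). *)

theory Defs
  imports "Jordan_Normal_Form.Spectral_Radius" "Jordan_Normal_Form.Gauss_Jordan_Elimination"
    "HOL-Library.Extended_Real"
begin

definition psd :: "real mat \<Rightarrow> bool" where
  "psd M \<longleftrightarrow> M \<in> carrier_mat (dim_row M) (dim_row M) \<and> transpose_mat M = M \<and>
     (\<forall>v \<in> carrier_vec (dim_row M). v \<bullet> (M *\<^sub>v v) \<ge> 0)"

definition pd :: "real mat \<Rightarrow> bool" where
  "pd M \<longleftrightarrow> M \<in> carrier_mat (dim_row M) (dim_row M) \<and> transpose_mat M = M \<and>
     (\<forall>v \<in> carrier_vec (dim_row M). v \<noteq> 0\<^sub>v (dim_row M) \<longrightarrow> v \<bullet> (M *\<^sub>v v) > 0)"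

definition mtrace :: "real mat \<Rightarrow> real" where
  "mtrace M = (\<Sum>i<dim_row M. M $$ (i,i))"

definition minv :: "real mat \<Rightarrow> real mat" where
  "minv M = the (mat_inverse M)"

definition rho :: "real mat \<Rightarrow> real" where
  "rho M = spectral_radius (map_mat complex_of_real M)"

definition schur_stable :: "real mat \<Rightarrow> bool" where
  "schur_stable M \<longleftrightarrow> rho M < 1"

definition max_norm :: "real mat \<Rightarrow> real" where
  "max_norm M = Max (insert 0 {\<bar>M $$ (i,j)\<bar> | i j. i < dim_row M \<and> j < dim_col M})"

definition hcat :: "real mat \<Rightarrow> real mat \<Rightarrow> real mat" where
  "hcat M N = mat (dim_row M) (dim_col M + dim_col N)
     (\<lambda>(i,j). if j < dim_col M then M $$ (i,j) else N $$ (i, j - dim_col M))"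

definition vcat :: "real mat \<Rightarrow> real mat \<Rightarrow> real mat" where
  "vcat M N = mat (dim_row M + dim_row N) (dim_col M)
     (\<lambda>(i,j). if i < dim_row M then M $$ (i,j) else N $$ (i - dim_row M, j))"

definition bdiag :: "real mat \<Rightarrow> real mat \<Rightarrow> real mat" where
  "bdiag M N = four_block_mat M (0\<^sub>m (dim_row M) (dim_col N)) (0\<^sub>m (dim_row N) (dim_col M)) N"

definition row_block :: "real mat \<Rightarrow> nat \<Rightarrow> nat \<Rightarrow> real mat" where
  "row_block M a k = mat k (dim_col M) (\<lambda>(i,j). M $$ (a + i, j))"

definition block4 :: "real mat \<Rightarrow> real mat \<Rightarrow> real mat \<Rightarrow> real mat \<Rightarrow>
                      real mat \<Rightarrow> real mat \<Rightarrow> real mat \<Rightarrow> real mat \<Rightarrow>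
                      real mat \<Rightarrow> real mat \<Rightarrow> real mat \<Rightarrow> real mat \<Rightarrow>
                      real mat \<Rightarrow> real mat \<Rightarrow> real mat \<Rightarrow> real mat \<Rightarrow> real mat" where
  "block4 M11 M12 M13 M14 M21 M22 M23 M24 M31 M32 M33 M34 M41 M42 M43 M44 =
     four_block_mat (four_block_mat M11 M12 M21 M22) (four_block_mat M13 M14 M23 M24)
                    (four_block_mat M31 M32 M41 M42) (four_block_mat M33 M34 M43 M44)"

section \<open>Data blocks of D_Delta = [Z; X; U] (rows 0..n-1, n..2n-1, 2n..2n+m-1)\<close>

definition Zd :: "nat \<Rightarrow> nat \<Rightarrow> real mat \<Rightarrow> real mat" where
  "Zd n m DD = row_block DD 0 n"
definition Xd :: "nat \<Rightarrow> nat \<Rightarrow> real mat \<Rightarrow> real mat" where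
  "Xd n m DD = row_block DD n n"
definition Ud :: "nat \<Rightarrow> nat \<Rightarrow> real mat \<Rightarrow> real mat" where
  "Ud n m DD = row_block DD (2*n) m"

definition lqr_cost :: "nat \<Rightarrow> real mat \<Rightarrow> real mat \<Rightarrow> real mat \<Rightarrow> real mat \<Rightarrow> real mat \<Rightarrow> ereal" where
  "lqr_cost n A B Q R K =
     (if schur_stable (A + B * K) then
        ereal (\<Sum>i<n. \<Sum>t. (let x = ((A + B * K) ^\<^sub>m t) *\<^sub>v unit_vec n i; u = K *\<^sub>v x
                             in x \<bullet> (Q *\<^sub>v x) + u \<bullet> (R *\<^sub>v u)))
      else \<infinity>)"

definition F_mat :: "nat \<Rightarrow> nat \<Rightarrow> real mat \<Rightarrow> real mat \<Rightarrow> real mat \<Rightarrow> real mat \<Rightarrow> real mat" where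
  "F_mat n m V L S DD =
     (let Z = Zd n m DD; X = Xd n m DD; U = Ud n m DD in
      bdiag (four_block_mat S (V * U * L) (transpose_mat (V * U * L)) (X * L))
            (four_block_mat (X * L - 1\<^sub>m n) (Z * L) (transpose_mat (Z * L)) (X * L)))"

definition Dbar :: "nat \<Rightarrow> nat \<Rightarrow> real mat \<Rightarrow> real mat" where
  "Dbar n m DD =
     (let Z = Zd n m DD; X = Xd n m DD; U = Ud n m DD in
      vcat (1\<^sub>m (2*n+m))
           (hcat (transpose_mat Z) (hcat (- transpose_mat X) (- transpose_mat U))))"

definition N_mat :: "nat \<Rightarrow> nat \<Rightarrow> nat \<Rightarrow> real \<Rightarrow> real mat \<Rightarrow> real mat" where
  "N_mat n m T eps DD =
     bdiag (transpose_mat (Dbar n m DD) *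
              bdiag ((eps^2 * real ((2*n+m) * T)) \<cdot>\<^sub>m 1\<^sub>m (2*n+m)) (- 1\<^sub>m T) *
              Dbar n m DD)
           (0\<^sub>m n n)"

definition robust_mat :: "nat \<Rightarrow> nat \<Rightarrow> real mat \<Rightarrow> real \<Rightarrow> real mat \<Rightarrow> real mat" where
  "robust_mat n m L \<beta> DD =
     (let X = Xd n m DD; U = Ud n m DD in
      block4 (X * L - \<beta> \<cdot>\<^sub>m 1\<^sub>m n) (0\<^sub>m n n) (0\<^sub>m n m) (0\<^sub>m n n)
             (0\<^sub>m n n) (- (X * L)) (- (transpose_mat L * transpose_mat U)) (0\<^sub>m n n)
             (0\<^sub>m m n) (- (U * L)) (0\<^sub>m m m) (U * L)
             (0\<^sub>m n n) (0\<^sub>m n n) (transpose_mat (U * L)) (X * L))"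

definition RS_feasible ::
  "nat \<Rightarrow> nat \<Rightarrow> nat \<Rightarrow> real mat \<Rightarrow> real mat \<Rightarrow> real \<Rightarrow> real \<Rightarrow> real mat
     \<Rightarrow> real mat \<Rightarrow> real mat \<Rightarrow> real \<Rightarrow> real \<Rightarrow> bool" where
  "RS_feasible n m T Q V eps J DD L S \<alpha> \<beta> \<longleftrightarrow>
     L \<in> carrier_mat T n \<and> S \<in> carrier_mat m m \<and>
     mtrace (Q * Xd n m DD * L) + mtrace S \<le> J \<and>
     psd (F_mat n m V L S DD) \<and>
     psd (robust_mat n m L \<beta> DD - \<alpha> \<cdot>\<^sub>m N_mat n m T eps DD) \<and>
     \<alpha> \<ge> 0 \<and> \<beta> \<ge> 1"

definition F_K :: "nat \<Rightarrow> nat \<Rightarrow> real mat \<Rightarrow> real mat \<Rightarrow> real mat" where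
  "F_K n m L DD = Ud n m DD * L * minv (Xd n m DD * L)"

end

theory Submission
  imports Defs
begin


lemma mult_vec_zero[simp]: "A \<in> carrier_mat nr nc \<Longrightarrow> A *\<^sub>v 0\<^sub>v nc = (0\<^sub>v nr :: 'a::semiring_0 vec)"
  by (rule eq_vecI) (auto simp: scalar_prod_def)

lemma zero_mult_vec[simp]: "v \<in> carrier_vec nc \<Longrightarrow> 0\<^sub>m nr nc *\<^sub>v v = (0\<^sub>v nr :: 'a::semiring_0 vec)"
  by (rule eq_vecI) (auto simp: scalar_prod_def)

lemma fb_bil:
  fixes A B C D :: "real mat"
  assumes A: "A \<in> carrier_mat r1 c1" and B: "B \<in> carrier_mat r1 c2"
    and C: "C \<in> carrier_mat r2 c1" and D: "D \<in> carrier_mat r2 c2"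
    and a: "a \<in> carrier_vec r1" and b: "b \<in> carrier_vec r2"
    and c: "c \<in> carrier_vec c1" and d: "d \<in> carrier_vec c2"
  shows "(a @\<^sub>v b) \<bullet> (four_block_mat A B C D *\<^sub>v (c @\<^sub>v d)) =
         a \<bullet> (A *\<^sub>v c) + a \<bullet> (B *\<^sub>v d) + b \<bullet> (C *\<^sub>v c) + b \<bullet> (D *\<^sub>v d)"
proof -
  have "four_block_mat A B C D *\<^sub>v (c @\<^sub>v d) = (A *\<^sub>v c + B *\<^sub>v d) @\<^sub>v (C *\<^sub>v c + D *\<^sub>v d)"
    by (rule four_block_mat_mult_vec[OF A B C D c d])
  then show ?thesis using A B C D a b c d
    by (simp add: scalar_prod_append[of _ r1 _ r2] scalar_prod_add_distrib[of _ r1]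
        scalar_prod_add_distrib[of _ r2])
qed

lemma fb_qf:
  fixes A B C D :: "real mat"
  assumes A: "A \<in> carrier_mat n1 n1" and B: "B \<in> carrier_mat n1 n2"
    and C: "C \<in> carrier_mat n2 n1" and D: "D \<in> carrier_mat n2 n2"
    and u: "u \<in> carrier_vec n1" and v: "v \<in> carrier_vec n2"
  shows "(u @\<^sub>v v) \<bullet> (four_block_mat A B C D *\<^sub>v (u @\<^sub>v v)) =
         u \<bullet> (A *\<^sub>v u) + u \<bullet> (B *\<^sub>v v) + v \<bullet> (C *\<^sub>v u) + v \<bullet> (D *\<^sub>v v)"
proof -
  have "four_block_mat A B C D *\<^sub>v (u @\<^sub>v v) = (A *\<^sub>v u + B *\<^sub>v v) @\<^sub>v (C *\<^sub>v u + D *\<^sub>v v)"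
    by (rule four_block_mat_mult_vec[OF A B C D u v])
  then show ?thesis using A B C D u v
    by (simp add: scalar_prod_append[of _ n1 _ n2] scalar_prod_add_distrib[of _ n1]
        scalar_prod_add_distrib[of _ n2])
qed

lemma four_block_eq:
  fixes A B C D A' B' C' D' :: "'a::zero mat"
  assumes A: "A \<in> carrier_mat n1 m1" and B: "B \<in> carrier_mat n1 m2"
    and C: "C \<in> carrier_mat n2 m1" and D: "D \<in> carrier_mat n2 m2"
    and A': "A' \<in> carrier_mat n1 m1" and B': "B' \<in> carrier_mat n1 m2"
    and C': "C' \<in> carrier_mat n2 m1" and D': "D' \<in> carrier_mat n2 m2"
    and eq: "four_block_mat A B C D = four_block_mat A' B' C' D'"
  shows "A = A' \<and> B = B' \<and> C = C' \<and> D = D'"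
proof (intro conjI)
  let ?M = "four_block_mat A B C D" let ?M' = "four_block_mat A' B' C' D'"
  have e: "\<And>i j. i < n1 + n2 \<Longrightarrow> j < m1 + m2 \<Longrightarrow> ?M $$ (i,j) = ?M' $$ (i,j)" using eq by simp
  show "A = A'"
  proof (rule eq_matI)
    fix i j assume "i < dim_row A'" "j < dim_col A'"
    then show "A $$ (i,j) = A' $$ (i,j)" using e[of i j] A B C D A' B' C' D' by simp
  qed (use A A' in auto)
  show "B = B'"
  proof (rule eq_matI)
    fix i j assume "i < dim_row B'" "j < dim_col B'"
    then show "B $$ (i,j) = B' $$ (i,j)" using e[of i "m1 + j"] A B C D A' B' C' D' by simp
  qed (use B B' in auto)
  show "C = C'"
  proof (rule eq_matI)
    fix i j assume "i < dim_row C'" "j < dim_col C'"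
    then show "C $$ (i,j) = C' $$ (i,j)" using e[of "n1 + i" j] A B C D A' B' C' D' by simp
  qed (use C C' in auto)
  show "D = D'"
  proof (rule eq_matI)
    fix i j assume "i < dim_row D'" "j < dim_col D'"
    then show "D $$ (i,j) = D' $$ (i,j)" using e[of "n1 + i" "m1 + j"] A B C D A' B' C' D' by simp
  qed (use D D' in auto)
qed

lemma psd_fb:
  fixes A B C D :: "real mat"
  assumes psd: "psd (four_block_mat A B C D)"
    and A: "A \<in> carrier_mat n1 n1" and B: "B \<in> carrier_mat n1 n2"
    and C: "C \<in> carrier_mat n2 n1" and D: "D \<in> carrier_mat n2 n2"
  shows "\<And>(u::real vec) v. u \<in> carrier_vec n1 \<Longrightarrow> v \<in> carrier_vec n2 \<Longrightarrow>
           0 \<le> u \<bullet> (A *\<^sub>v u) + u \<bullet> (B *\<^sub>v v) + v \<bullet> (C *\<^sub>v u) + v \<bullet> (D *\<^sub>v v)"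
    and "transpose_mat A = A" "transpose_mat D = D" "C = transpose_mat B"
    and "psd A" "psd D"
proof -
  let ?M = "four_block_mat A B C D"
  have dr: "dim_row ?M = n1 + n2" using A D by simp
  have sym: "transpose_mat ?M = ?M" using psd unfolding psd_def by auto
  have qf: "\<And>w::real vec. w \<in> carrier_vec (n1+n2) \<Longrightarrow> 0 \<le> w \<bullet> (?M *\<^sub>v w)"
    using psd dr unfolding psd_def by auto
  show q: "\<And>(u::real vec) v. u \<in> carrier_vec n1 \<Longrightarrow> v \<in> carrier_vec n2 \<Longrightarrow>
           0 \<le> u \<bullet> (A *\<^sub>v u) + u \<bullet> (B *\<^sub>v v) + v \<bullet> (C *\<^sub>v u) + v \<bullet> (D *\<^sub>v v)"
  proof -
    fix u v :: "real vec" assume u: "u \<in> carrier_vec n1" and v: "v \<in> carrier_vec n2"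
    have "0 \<le> (u @\<^sub>v v) \<bullet> (?M *\<^sub>v (u @\<^sub>v v))" using qf u v by simp
    then show "0 \<le> u \<bullet> (A *\<^sub>v u) + u \<bullet> (B *\<^sub>v v) + v \<bullet> (C *\<^sub>v u) + v \<bullet> (D *\<^sub>v v)"
      using fb_qf[OF A B C D u v] by simp
  qed
  have "transpose_mat ?M = four_block_mat (transpose_mat A) (transpose_mat C) (transpose_mat B) (transpose_mat D)"
    by (rule transpose_four_block_mat[OF A B C D])
  with sym have "four_block_mat (transpose_mat A) (transpose_mat C) (transpose_mat B) (transpose_mat D) = ?M" by simp
  from four_block_eq[OF _ _ _ _ A B C D this] A B C D
  show tA: "transpose_mat A = A" and tD: "transpose_mat D = D" and tC: "C = transpose_mat B" by auto
  show "psd A" unfolding psd_def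
  proof (intro conjI ballI)
    fix u :: "real vec" assume "u \<in> carrier_vec (dim_row A)"
    hence u: "u \<in> carrier_vec n1" using A by simp
    show "0 \<le> u \<bullet> (A *\<^sub>v u)" using q[of u "0\<^sub>v n2"] A B C D u by simp
  qed (use A tA in auto)
  show "psd D" unfolding psd_def
  proof (intro conjI ballI)
    fix v :: "real vec" assume "v \<in> carrier_vec (dim_row D)"
    hence v: "v \<in> carrier_vec n2" using D by simp
    show "0 \<le> v \<bullet> (D *\<^sub>v v)" using q[of "0\<^sub>v n1" v] A B C D v by simp
  qed (use D tD in auto)
qed


lemma append_vec_assoc:
  fixes u v w :: "'a vec"
  shows "(u @\<^sub>v v) @\<^sub>v w = u @\<^sub>v (v @\<^sub>v w)"
  by (rule eq_vecI) (auto simp: index_append_vec nth_append algebra_simps)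

lemma vcat_mult_vec:
  fixes M N :: "real mat"
  assumes M: "M \<in> carrier_mat r1 c" and N: "N \<in> carrier_mat r2 c" and v: "v \<in> carrier_vec c"
  shows "vcat M N *\<^sub>v v = (M *\<^sub>v v) @\<^sub>v (N *\<^sub>v v)"
  by (rule eq_vecI) (use M N v in \<open>auto simp: vcat_def scalar_prod_def\<close>)

lemma sum_split_nat:
  fixes f :: "nat \<Rightarrow> 'a::comm_monoid_add"
  shows "(\<Sum>k<a+b. f k) = (\<Sum>k<a. f k) + (\<Sum>k<b. f (a+k))"
  by (induction b) (auto simp: add.assoc)

lemma block4_qf:
  fixes M11 M12 M13 M14 M21 M22 M23 M24 M31 M32 M33 M34 M41 M42 M43 M44 :: "real mat"
  assumes "M11 \<in> carrier_mat n1 n1" "M12 \<in> carrier_mat n1 n2" "M13 \<in> carrier_mat n1 n3" "M14 \<in> carrier_mat n1 n4"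
   "M21 \<in> carrier_mat n2 n1" "M22 \<in> carrier_mat n2 n2" "M23 \<in> carrier_mat n2 n3" "M24 \<in> carrier_mat n2 n4"
   "M31 \<in> carrier_mat n3 n1" "M32 \<in> carrier_mat n3 n2" "M33 \<in> carrier_mat n3 n3" "M34 \<in> carrier_mat n3 n4"
   "M41 \<in> carrier_mat n4 n1" "M42 \<in> carrier_mat n4 n2" "M43 \<in> carrier_mat n4 n3" "M44 \<in> carrier_mat n4 n4"
   and x: "x1 \<in> carrier_vec n1" "x2 \<in> carrier_vec n2" "x3 \<in> carrier_vec n3" "x4 \<in> carrier_vec n4"
  shows "((x1 @\<^sub>v x2) @\<^sub>v (x3 @\<^sub>v x4)) \<bullet>
     (block4 M11 M12 M13 M14 M21 M22 M23 M24 M31 M32 M33 M34 M41 M42 M43 M44 *\<^sub>v ((x1 @\<^sub>v x2) @\<^sub>v (x3 @\<^sub>v x4)))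
   = x1 \<bullet> (M11 *\<^sub>v x1) + x1 \<bullet> (M12 *\<^sub>v x2) + x1 \<bullet> (M13 *\<^sub>v x3) + x1 \<bullet> (M14 *\<^sub>v x4)
   + x2 \<bullet> (M21 *\<^sub>v x1) + x2 \<bullet> (M22 *\<^sub>v x2) + x2 \<bullet> (M23 *\<^sub>v x3) + x2 \<bullet> (M24 *\<^sub>v x4)
   + x3 \<bullet> (M31 *\<^sub>v x1) + x3 \<bullet> (M32 *\<^sub>v x2) + x3 \<bullet> (M33 *\<^sub>v x3) + x3 \<bullet> (M34 *\<^sub>v x4)
   + x4 \<bullet> (M41 *\<^sub>v x1) + x4 \<bullet> (M42 *\<^sub>v x2) + x4 \<bullet> (M43 *\<^sub>v x3) + x4 \<bullet> (M44 *\<^sub>v x4)"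
proof -
  note c = assms
  have b1: "four_block_mat M11 M12 M21 M22 \<in> carrier_mat (n1+n2) (n1+n2)" using c by auto
  have b2: "four_block_mat M13 M14 M23 M24 \<in> carrier_mat (n1+n2) (n3+n4)" using c by auto
  have b3: "four_block_mat M31 M32 M41 M42 \<in> carrier_mat (n3+n4) (n1+n2)" using c by auto
  have b4: "four_block_mat M33 M34 M43 M44 \<in> carrier_mat (n3+n4) (n3+n4)" using c by auto
  have v12: "x1 @\<^sub>v x2 \<in> carrier_vec (n1+n2)" and v34: "x3 @\<^sub>v x4 \<in> carrier_vec (n3+n4)" using x by auto
  show ?thesis unfolding block4_def
    apply (subst fb_bil[OF b1 b2 b3 b4 v12 v34 v12 v34])
    apply (subst fb_bil[OF c(1,2,5,6) x(1,2) x(1,2)])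
    apply (subst fb_bil[OF c(3,4,7,8) x(1,2) x(3,4)])
    apply (subst fb_bil[OF c(9,10,13,14) x(3,4) x(1,2)])
    apply (subst fb_bil[OF c(11,12,15,16) x(3,4) x(3,4)])
    by simp
qed

lemma qf_sum:
  fixes M :: "real mat"
  assumes M: "M \<in> carrier_mat n n" and x: "x \<in> carrier_vec n" and y: "y \<in> carrier_vec n"
  shows "x \<bullet> (M *\<^sub>v y) = (\<Sum>k<n. \<Sum>l<n. x$k * M$$(k,l) * y$l)"
  using M x y by (auto simp: scalar_prod_def sum_distrib_left mult.assoc lessThan_atLeast0 intro!: sum.cong)


definition qfun :: "nat \<Rightarrow> (nat \<Rightarrow> nat \<Rightarrow> real) \<Rightarrow> (nat \<Rightarrow> real) \<Rightarrow> real" where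
  "qfun n W x = (\<Sum>i<n. \<Sum>j<n. x i * W i j * x j)"

lemma sum_delta_l:
  assumes "j0 < (n::nat)"
  shows "(\<Sum>i<n. (if i = j0 then t else 0) * g i) = t * (g j0::real)"
proof -
  have "(\<Sum>i<n. (if i = j0 then t else 0) * g i) = (\<Sum>i<n. if i = j0 then t * g i else 0)"
    by (rule sum.cong) auto
  also have "\<dots> = t * g j0" using assms by simp
  finally show ?thesis .
qed

lemma sum_delta_r:
  assumes "j0 < (n::nat)"
  shows "(\<Sum>i<n. g i * (if i = j0 then t else 0)) = (g j0::real) * t"
  using sum_delta_l[OF assms, of t g] by (simp add: mult.commute)

lemma qf_shift:
  assumes sym: "\<forall>i<n. \<forall>j<n. W i j = W j i" and j0: "j0 < n"
  shows "qfun n W (\<lambda>i. x i - (if i = j0 then t else 0)) =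
         qfun n W x - 2 * t * (\<Sum>l<n. W j0 l * x l) + t^2 * W j0 j0"
proof -
  let ?d = "\<lambda>i::nat. if i = j0 then t else (0::real)"
  have e: "\<And>i j. (x i - ?d i) * W i j * (x j - ?d j) =
      x i * W i j * x j - ?d i * (W i j * x j) - ?d j * (x i * W i j) + ?d i * (?d j * W i j)"
    by (simp add: algebra_simps)
  have s1: "(\<Sum>i<n. \<Sum>j<n. ?d i * (W i j * x j)) = t * (\<Sum>l<n. W j0 l * x l)"
    using j0 by (simp add: sum_distrib_left[symmetric] sum_delta_l)
  have s2: "(\<Sum>i<n. \<Sum>j<n. ?d j * (x i * W i j)) = t * (\<Sum>l<n. W j0 l * x l)"
  proof -
    have "(\<Sum>i<n. \<Sum>j<n. ?d j * (x i * W i j)) = (\<Sum>i<n. t * (x i * W i j0))"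
      using j0 by (simp add: sum_delta_r mult.commute mult.left_commute)
    also have "\<dots> = t * (\<Sum>l<n. W j0 l * x l)"
      using sym j0 by (simp add: sum_distrib_left mult.commute)
    finally show ?thesis .
  qed
  have s3: "(\<Sum>i<n. \<Sum>j<n. ?d i * (?d j * W i j)) = t^2 * W j0 j0"
    using j0 by (simp add: sum_distrib_left[symmetric] sum_delta_l sum_delta_r power2_eq_square mult.commute)
  show ?thesis unfolding qfun_def
    by (simp only: e sum.distrib sum_subtractf s1 s2 s3)
qed

lemma trace_nonneg_aux:
  fixes Q :: "nat \<Rightarrow> nat \<Rightarrow> real"
  assumes Qpsd: "\<And>x. 0 \<le> qfun n Q x"
  shows "k \<le> n \<Longrightarrow> (\<forall>i<n. \<forall>j<n. W i j = W j i) \<Longrightarrow> (\<forall>x. 0 \<le> qfun n W x) \<Longrightarrow>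
     (\<forall>i<n. \<forall>j<n. (i < n - k \<or> j < n - k) \<longrightarrow> W i j = 0) \<Longrightarrow>
     0 \<le> (\<Sum>i<n. \<Sum>j<n. Q i j * W j i)"
proof (induction k arbitrary: W)
  case 0
  then show ?case by simp
next
  case (Suc k)
  define j0 where "j0 = n - Suc k"
  have j0n: "j0 < n" using Suc.prems(1) unfolding j0_def by simp
  have nk: "n - k = Suc j0" using Suc.prems(1) unfolding j0_def by simp
  note sym = Suc.prems(2) and psdW = Suc.prems(3) and zp = Suc.prems(4)
  have zp0: "\<And>i j. i < n \<Longrightarrow> j < n \<Longrightarrow> i < j0 \<or> j < j0 \<Longrightarrow> W i j = 0"
    using zp unfolding j0_def by auto
  define s where "s = (\<lambda>x. \<Sum>l<n. W j0 l * x l)"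
  have shift: "\<And>x t. 0 \<le> qfun n W x - 2 * t * s x + t^2 * W j0 j0"
    using qf_shift[OF sym j0n] psdW unfolding s_def by metis
  have d0: "0 \<le> W j0 j0" using shift[of "\<lambda>_. 0" "-1"] by (simp add: qfun_def s_def)
  show ?case
  proof (cases "W j0 j0 = 0")
    case True
    have sx: "s x = 0" for x
    proof (rule ccontr)
      assume ne: "s x \<noteq> 0"
      have "0 \<le> qfun n W x - 2 * ((qfun n W x + 1) / (2 * s x)) * s x"
        using shift[of x "(qfun n W x + 1) / (2 * s x)"] True by simp
      also have "\<dots> = -1" using ne by (simp add: field_simps)
      finally show False by simp
    qed
    have row0: "W j0 l = 0" if l: "l < n" for l
    proof -
      have "s (\<lambda>i. if i = l then 1 else 0) = W j0 l" unfolding s_def using l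
        by (simp add: if_distrib cong: if_cong)
      then show ?thesis using sx by simp
    qed
    show ?thesis
    proof (rule Suc.IH)
      show "k \<le> n" using Suc.prems by simp
      show "\<forall>i<n. \<forall>j<n. (i < n - k \<or> j < n - k) \<longrightarrow> W i j = 0"
      proof (intro allI impI)
        fix i j assume i: "i < n" and j: "j < n" and h: "i < n - k \<or> j < n - k"
        show "W i j = 0"
        proof (cases "i < j0 \<or> j < j0")
          case True then show ?thesis using zp0 i j by auto
        next
          case False
          with h nk have "i = j0 \<or> j = j0" by auto
          then show ?thesis using row0 sym i j by auto
        qed
      qed
    qed (use sym psdW in auto)
  next
    case False
    define d where "d = W j0 j0"
    have dpos: "0 < d" using d0 False unfolding d_def by simp
    define W' where "W' = (\<lambda>i l. W i l - W i j0 * W j0 l / d)"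
    have symW': "\<forall>i<n. \<forall>j<n. W' i j = W' j i"
      using sym j0n unfolding W'_def by (auto simp: mult.commute)
    have qW': "qfun n W' x = qfun n W x - (s x)^2 / d" for x
    proof -
      have "qfun n W' x = qfun n W x - (\<Sum>i<n. \<Sum>l<n. x i * (W i j0 * W j0 l / d) * x l)"
        unfolding qfun_def W'_def by (simp add: algebra_simps sum_subtractf)
      also have "(\<Sum>i<n. \<Sum>l<n. x i * (W i j0 * W j0 l / d) * x l) =
                 (\<Sum>i<n. W j0 i * x i) * (\<Sum>l<n. W j0 l * x l) / d"
        using sym j0n
        by (simp add: sum_distrib_left sum_distrib_right sum_divide_distrib algebra_simps)
      finally show ?thesis unfolding s_def by (simp add: power2_eq_square)
    qed
    have psdW': "\<forall>x. 0 \<le> qfun n W' x"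
    proof
      fix x
      have "0 \<le> qfun n W x - 2 * (s x / d) * s x + (s x / d)^2 * W j0 j0" by (rule shift)
      also have "\<dots> = qfun n W x - (s x)^2 / d" using dpos unfolding d_def[symmetric]
        by (simp add: field_simps power2_eq_square)
      finally show "0 \<le> qfun n W' x" using qW' by simp
    qed
    have zpW': "\<forall>i<n. \<forall>j<n. (i < n - k \<or> j < n - k) \<longrightarrow> W' i j = 0"
    proof (intro allI impI)
      fix i j assume i: "i < n" and j: "j < n" and h: "i < n - k \<or> j < n - k"
      show "W' i j = 0"
      proof (cases "i < j0 \<or> j < j0")
        case True
        then show ?thesis unfolding W'_def using zp0 i j j0n by auto
      next
        case False
        with h nk have "i = j0 \<or> j = j0" by auto
        then show ?thesis unfolding W'_def using dpos sym i j j0n unfolding d_def by auto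
      qed
    qed
    have IH': "0 \<le> (\<Sum>i<n. \<Sum>j<n. Q i j * W' j i)"
      using Suc.IH[of W'] Suc.prems(1) symW' psdW' zpW' by simp
    have split: "(\<Sum>i<n. \<Sum>j<n. Q i j * W j i) = (\<Sum>i<n. \<Sum>j<n. Q i j * W' j i) +
        qfun n Q (\<lambda>i. W j0 i) / d"
    proof -
      have "(\<Sum>i<n. \<Sum>j<n. Q i j * W j i) = (\<Sum>i<n. \<Sum>j<n. Q i j * W' j i + Q i j * (W j j0 * W j0 i / d))"
        unfolding W'_def by (simp add: algebra_simps)
      also have "\<dots> = (\<Sum>i<n. \<Sum>j<n. Q i j * W' j i) + (\<Sum>i<n. \<Sum>j<n. Q i j * (W j j0 * W j0 i / d))"
        by (simp add: sum.distrib)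
      also have "(\<Sum>i<n. \<Sum>j<n. Q i j * (W j j0 * W j0 i / d)) = qfun n Q (\<lambda>i. W j0 i) / d"
        unfolding qfun_def using sym j0n
        by (simp add: sum_divide_distrib algebra_simps)
      finally show ?thesis .
    qed
    show ?thesis unfolding split using IH' Qpsd[of "\<lambda>i. W j0 i"] dpos by simp
  qed
qed

lemma trace_nonneg_fun:
  fixes Q W :: "nat \<Rightarrow> nat \<Rightarrow> real"
  assumes "\<And>x. 0 \<le> qfun n Q x" "\<forall>i<n. \<forall>j<n. W i j = W j i" "\<forall>x. 0 \<le> qfun n W x"
  shows "0 \<le> (\<Sum>i<n. \<Sum>j<n. Q i j * W j i)"
  using trace_nonneg_aux[of n Q n W] assms by auto


lemma bil_sym:
  fixes P :: "real mat"
  assumes P: "P \<in> carrier_mat n n" and Ps: "transpose_mat P = P"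
    and u: "u \<in> carrier_vec n" and w: "w \<in> carrier_vec n"
  shows "w \<bullet> (P *\<^sub>v u) = u \<bullet> (P *\<^sub>v w)"
proof -
  have "(transpose_mat P *\<^sub>v w) \<bullet> u = w \<bullet> (P *\<^sub>v u)" by (rule transpose_vec_mult_scalar[OF P u w])
  then have "w \<bullet> (P *\<^sub>v u) = (P *\<^sub>v w) \<bullet> u" using Ps by simp
  also have "\<dots> = u \<bullet> (P *\<^sub>v w)" using P u w by (intro comm_scalar_prod[of _ n]) auto
  finally show ?thesis .
qed

lemma bil_comb:
  fixes P :: "real mat"
  assumes P: "P \<in> carrier_mat n n" and Ps: "transpose_mat P = P"
    and u: "u \<in> carrier_vec n" and w: "w \<in> carrier_vec n"
  shows "(\<alpha> \<cdot>\<^sub>v u + \<beta> \<cdot>\<^sub>v w) \<bullet> (P *\<^sub>v (\<alpha> \<cdot>\<^sub>v u + \<beta> \<cdot>\<^sub>v w)) =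
     \<alpha>^2 * (u \<bullet> (P *\<^sub>v u)) + 2 * \<alpha> * \<beta> * (u \<bullet> (P *\<^sub>v w)) + \<beta>^2 * (w \<bullet> (P *\<^sub>v w))"
proof -
  have s: "w \<bullet> (P *\<^sub>v u) = u \<bullet> (P *\<^sub>v w)" by (rule bil_sym[OF P Ps u w])
  have "(\<alpha> \<cdot>\<^sub>v u + \<beta> \<cdot>\<^sub>v w) \<bullet> (P *\<^sub>v (\<alpha> \<cdot>\<^sub>v u + \<beta> \<cdot>\<^sub>v w)) =
     \<alpha> * \<alpha> * (u \<bullet> (P *\<^sub>v u)) + \<alpha> * \<beta> * (u \<bullet> (P *\<^sub>v w)) + \<beta> * \<alpha> * (w \<bullet> (P *\<^sub>v u)) + \<beta> * \<beta> * (w \<bullet> (P *\<^sub>v w))"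
    using P u w
    by (simp add: mult_add_distrib_mat_vec[of P n n] mult_mat_vec[of P n n] scalar_prod_add_distrib[of _ n]
        add_scalar_prod_distrib[of _ n] smult_scalar_prod_distrib[of _ n] scalar_prod_smult_distrib[of _ n] algebra_simps)
  then show ?thesis using s by (simp add: power2_eq_square algebra_simps)
qed

lemma lyap_rho:
  fixes Mc P :: "real mat"
  assumes n: "0 < n" and Mc: "Mc \<in> carrier_mat n n" and P: "P \<in> carrier_mat n n"
    and Ps: "transpose_mat P = P"
    and Ppsd: "\<And>x. x \<in> carrier_vec n \<Longrightarrow> 0 \<le> x \<bullet> (P *\<^sub>v x)"
    and lyap: "\<And>x. x \<in> carrier_vec n \<Longrightarrow>
        x \<bullet> x \<le> x \<bullet> (P *\<^sub>v x) - (transpose_mat Mc *\<^sub>v x) \<bullet> (P *\<^sub>v (transpose_mat Mc *\<^sub>v x))"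
  shows "rho Mc < 1"
proof -
  define C where "C = map_mat complex_of_real Mc"
  have C: "C \<in> carrier_mat n n" using Mc unfolding C_def by simp
  from spectral_radius_mem_max(1)[OF C n] obtain lam where
    lam: "lam \<in> spectrum C" and rl: "rho Mc = cmod lam"
    unfolding rho_def C_def[symmetric] by auto
  have "eigenvalue C lam" using lam unfolding spectrum_def by simp
  hence "poly (char_poly C) lam = 0" using eigenvalue_root_char_poly[OF C] by simp
  hence "poly (char_poly (transpose_mat C)) lam = 0" using char_poly_transpose_mat[OF C] by simp
  hence "eigenvalue (transpose_mat C) lam" using eigenvalue_root_char_poly[of "transpose_mat C" n] C by simp
  then obtain v where v: "v \<in> carrier_vec n" and v0: "v \<noteq> 0\<^sub>v n"
    and ev: "transpose_mat C *\<^sub>v v = lam \<cdot>\<^sub>v v"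
    unfolding eigenvalue_def eigenvector_def using C by auto
  define Mt where "Mt = transpose_mat Mc"
  have Mt: "Mt \<in> carrier_mat n n" using Mc unfolding Mt_def by simp
  have CT: "transpose_mat C = map_mat complex_of_real Mt" unfolding C_def Mt_def by (simp add: map_mat_transpose)
  define a where "a = vec n (\<lambda>i. Re (v $ i))"
  define b where "b = vec n (\<lambda>i. Im (v $ i))"
  define p where "p = Re lam"
  define q where "q = Im lam"
  have a: "a \<in> carrier_vec n" and b: "b \<in> carrier_vec n" unfolding a_def b_def by auto
  have evi: "(\<Sum>j<n. complex_of_real (Mt $$ (i,j)) * v $ j) = lam * v $ i" if i: "i < n" for i
  proof -
    have "(transpose_mat C *\<^sub>v v) $ i = (lam \<cdot>\<^sub>v v) $ i" using ev by simp
    then show ?thesis unfolding CT using i Mt v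
      by (simp add: scalar_prod_def lessThan_atLeast0)
  qed
  have ha: "Mt *\<^sub>v a = p \<cdot>\<^sub>v a + (- q) \<cdot>\<^sub>v b"
  proof (rule eq_vecI)
    fix i assume "i < dim_vec (p \<cdot>\<^sub>v a + (- q) \<cdot>\<^sub>v b)"
    hence i: "i < n" using a b by simp
    have "Re (\<Sum>j<n. complex_of_real (Mt $$ (i,j)) * v $ j) = Re (lam * v $ i)" using evi[OF i] by simp
    then show "(Mt *\<^sub>v a) $ i = (p \<cdot>\<^sub>v a + (- q) \<cdot>\<^sub>v b) $ i"
      using i Mt a b unfolding a_def b_def p_def q_def
      by (simp add: scalar_prod_def lessThan_atLeast0 Re_sum)
  qed (use Mt a b in auto)
  have hb: "Mt *\<^sub>v b = q \<cdot>\<^sub>v a + p \<cdot>\<^sub>v b"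
  proof (rule eq_vecI)
    fix i assume "i < dim_vec (q \<cdot>\<^sub>v a + p \<cdot>\<^sub>v b)"
    hence i: "i < n" using a b by simp
    have "Im (\<Sum>j<n. complex_of_real (Mt $$ (i,j)) * v $ j) = Im (lam * v $ i)" using evi[OF i] by simp
    then show "(Mt *\<^sub>v b) $ i = (q \<cdot>\<^sub>v a + p \<cdot>\<^sub>v b) $ i"
      using i Mt a b unfolding a_def b_def p_def q_def
      by (simp add: scalar_prod_def lessThan_atLeast0 Im_sum algebra_simps)
  qed (use Mt a b in auto)
  define ga where "ga = a \<bullet> (P *\<^sub>v a)"
  define gb where "gb = b \<bullet> (P *\<^sub>v b)"
  define gab where "gab = a \<bullet> (P *\<^sub>v b)"
  have la: "a \<bullet> a \<le> ga - (p^2 * ga + 2 * p * (-q) * gab + q^2 * gb)"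
    using lyap[OF a] ha bil_comb[OF P Ps a b, of p "-q"] unfolding Mt_def ga_def gb_def gab_def by simp
  have lb: "b \<bullet> b \<le> gb - (q^2 * ga + 2 * q * p * gab + p^2 * gb)"
    using lyap[OF b] hb bil_comb[OF P Ps a b, of q p] unfolding Mt_def ga_def gb_def gab_def by simp
  have sum_ab: "a \<bullet> a + b \<bullet> b \<le> (1 - (p^2 + q^2)) * (ga + gb)"
    using la lb by (simp add: algebra_simps)
  have gpos: "0 \<le> ga + gb" using Ppsd[OF a] Ppsd[OF b] unfolding ga_def gb_def by simp
  obtain i where i: "i < n" and vi: "v $ i \<noteq> 0"
    using v v0 by (metis dim_vec eq_vecI index_zero_vec(1) index_zero_vec(2) carrier_vecD)
  have "0 < (Re (v $ i))^2 + (Im (v $ i))^2" using vi by (simp add: complex_eq_iff sum_power2_gt_zero_iff)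
  also have "\<dots> \<le> (\<Sum>j<n. (Re (v $ j))^2 + (Im (v $ j))^2)"
    by (rule member_le_sum[where f = "\<lambda>j. (Re (v $ j))^2 + (Im (v $ j))^2"]) (use i in auto)
  also have "\<dots> = a \<bullet> a + b \<bullet> b" unfolding a_def b_def
    by (simp add: scalar_prod_def lessThan_atLeast0 power2_eq_square sum.distrib)
  finally have abpos: "0 < a \<bullet> a + b \<bullet> b" .
  have "p^2 + q^2 < 1"
  proof (rule ccontr)
    assume "\<not> p^2 + q^2 < 1"
    hence "(1 - (p^2 + q^2)) * (ga + gb) \<le> 0" using gpos by (simp add: mult_nonpos_nonneg)
    with sum_ab abpos show False by simp
  qed
  then have "cmod lam < 1" unfolding cmod_def p_def q_def by simp
  then show ?thesis using rl by simp
qed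


lemma smult_mat_mult_vec:
  fixes A :: "real mat"
  assumes "A \<in> carrier_mat nr nc" "v \<in> carrier_vec nc"
  shows "(c \<cdot>\<^sub>m A) *\<^sub>v v = c \<cdot>\<^sub>v (A *\<^sub>v v)"
  by (rule eq_vecI) (use assms in \<open>auto simp: scalar_prod_def sum_distrib_left mult.assoc\<close>)

lemma mat_vec_index_sum:
  assumes "A \<in> carrier_mat r c" "w \<in> carrier_vec c" "j < r"
  shows "(A *\<^sub>v w) $ j = (\<Sum>k<c. A $$ (j,k) * w $ k)"
  using assms by (auto simp: scalar_prod_def lessThan_atLeast0 intro: sum.cong)

lemma hcat_carrier[simp]: "M \<in> carrier_mat r c1 \<Longrightarrow> N \<in> carrier_mat r c2 \<Longrightarrow> hcat M N \<in> carrier_mat r (c1 + c2)"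
  unfolding hcat_def by auto

lemma vcat_carrier[simp]: "M \<in> carrier_mat r1 c \<Longrightarrow> N \<in> carrier_mat r2 c \<Longrightarrow> vcat M N \<in> carrier_mat (r1 + r2) c"
  unfolding vcat_def by auto

lemma row_block_carrier[simp]: "row_block M a k \<in> carrier_mat k (dim_col M)"
  unfolding row_block_def by auto

lemma Zd_carrier: "DD \<in> carrier_mat (2*n+m) T \<Longrightarrow> Zd n m DD \<in> carrier_mat n T"
  unfolding Zd_def by (metis carrier_matD(2) row_block_carrier)
lemma Xd_carrier: "DD \<in> carrier_mat (2*n+m) T \<Longrightarrow> Xd n m DD \<in> carrier_mat n T"
  unfolding Xd_def by (metis carrier_matD(2) row_block_carrier)
lemma Ud_carrier: "DD \<in> carrier_mat (2*n+m) T \<Longrightarrow> Ud n m DD \<in> carrier_mat m T"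
  unfolding Ud_def by (metis carrier_matD(2) row_block_carrier)

lemma Hc_entry:
  fixes DD :: "real mat"
  assumes DD: "DD \<in> carrier_mat (2*n+m) T"
    and x: "x \<in> carrier_vec n" and a: "a \<in> carrier_vec n" and b: "b \<in> carrier_vec m" and j: "j < T"
  shows "(hcat (transpose_mat (Zd n m DD)) (hcat (- transpose_mat (Xd n m DD)) (- transpose_mat (Ud n m DD)))
          *\<^sub>v (x @\<^sub>v (a @\<^sub>v b))) $ j
       = (\<Sum>k<2*n+m. DD $$ (k,j) * (x @\<^sub>v ((- a) @\<^sub>v (- b))) $ k)"
proof -
  have Z: "Zd n m DD \<in> carrier_mat n T" and X: "Xd n m DD \<in> carrier_mat n T" and U: "Ud n m DD \<in> carrier_mat m T"
    using DD Zd_carrier Xd_carrier Ud_carrier by auto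
  let ?H = "hcat (transpose_mat (Zd n m DD)) (hcat (- transpose_mat (Xd n m DD)) (- transpose_mat (Ud n m DD)))"
  have H: "?H \<in> carrier_mat T (n + (n + m))" using Z X U by auto
  have w: "x @\<^sub>v (a @\<^sub>v b) \<in> carrier_vec (n + (n + m))" using x a b by auto
  have "(?H *\<^sub>v (x @\<^sub>v (a @\<^sub>v b))) $ j = (\<Sum>k<n+(n+m). ?H $$ (j,k) * (x @\<^sub>v (a @\<^sub>v b)) $ k)"
    by (rule mat_vec_index_sum[OF H w j])
  also have "\<dots> = (\<Sum>k<2*n+m. DD $$ (k,j) * (x @\<^sub>v ((- a) @\<^sub>v (- b))) $ k)"
  proof -
    have "n + (n+m) = 2*n+m" by simp
    moreover have "?H $$ (j,k) * (x @\<^sub>v (a @\<^sub>v b)) $ k = DD $$ (k,j) * (x @\<^sub>v ((- a) @\<^sub>v (- b))) $ k"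
      if k: "k < 2*n+m" for k
      using k j Z X U x a b DD
      by (auto simp: hcat_def Zd_def Xd_def Ud_def row_block_def)
    ultimately show ?thesis by (auto intro: sum.cong)
  qed
  finally show ?thesis .
qed

lemma N_qf:
  fixes DD :: "real mat"
  assumes DD: "DD \<in> carrier_mat (2*n+m) T"
    and x: "x \<in> carrier_vec n" and a: "a \<in> carrier_vec n" and b: "b \<in> carrier_vec m"
    and y: "y \<in> carrier_vec n"
  shows "(((x @\<^sub>v a) @\<^sub>v b) @\<^sub>v y) \<bullet> (N_mat n m T eps DD *\<^sub>v (((x @\<^sub>v a) @\<^sub>v b) @\<^sub>v y))
     = eps^2 * real ((2*n+m) * T) * (x \<bullet> x + a \<bullet> a + b \<bullet> b)
       - (hcat (transpose_mat (Zd n m DD)) (hcat (- transpose_mat (Xd n m DD)) (- transpose_mat (Ud n m DD)))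
          *\<^sub>v (x @\<^sub>v (a @\<^sub>v b))) \<bullet>
         (hcat (transpose_mat (Zd n m DD)) (hcat (- transpose_mat (Xd n m DD)) (- transpose_mat (Ud n m DD)))
          *\<^sub>v (x @\<^sub>v (a @\<^sub>v b)))"
proof -
  have Z: "Zd n m DD \<in> carrier_mat n T" and X: "Xd n m DD \<in> carrier_mat n T" and U: "Ud n m DD \<in> carrier_mat m T"
    using DD Zd_carrier Xd_carrier Ud_carrier by auto
  define Hc where "Hc = hcat (transpose_mat (Zd n m DD)) (hcat (- transpose_mat (Xd n m DD)) (- transpose_mat (Ud n m DD)))"
  have Hc: "Hc \<in> carrier_mat T (2*n+m)" using Z X U unfolding Hc_def
    by (metis add.assoc hcat_carrier mult_2 transpose_carrier_mat uminus_carrier_iff_mat)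
  define c where "c = eps^2 * real ((2*n+m) * T)"
  define Db where "Db = Dbar n m DD"
  have Db_eq: "Db = vcat (1\<^sub>m (2*n+m)) Hc" unfolding Db_def Dbar_def Hc_def by simp
  have Db: "Db \<in> carrier_mat (2*n+m+T) (2*n+m)" unfolding Db_eq using Hc by simp
  define H where "H = bdiag (c \<cdot>\<^sub>m 1\<^sub>m (2*n+m)) (- 1\<^sub>m T)"
  have H: "H \<in> carrier_mat (2*n+m+T) (2*n+m+T)" unfolding H_def bdiag_def by auto
  define G where "G = transpose_mat Db * H * Db"
  have G: "G \<in> carrier_mat (2*n+m) (2*n+m)" unfolding G_def using Db H by auto
  have dcD: "dim_col (Dbar n m DD) = 2*n+m" "dim_row (Dbar n m DD) = 2*n+m+T" using Db unfolding Db_def by auto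
  have Neq: "N_mat n m T eps DD = four_block_mat G (0\<^sub>m (2*n+m) n) (0\<^sub>m n (2*n+m)) (0\<^sub>m n n)"
    unfolding N_mat_def G_def H_def Db_def c_def
    by (simp add: bdiag_def dcD)
  define w where "w = (x @\<^sub>v a) @\<^sub>v b"
  have w: "w \<in> carrier_vec (2*n+m)" unfolding w_def using x a b by (simp add: mult_2)
  have w': "w = x @\<^sub>v (a @\<^sub>v b)" unfolding w_def by (rule append_vec_assoc)
  have "(w @\<^sub>v y) \<bullet> (N_mat n m T eps DD *\<^sub>v (w @\<^sub>v y)) = w \<bullet> (G *\<^sub>v w)"
    unfolding Neq using fb_bil[OF G _ _ _ w y w y] w y G by simp
  also have "G *\<^sub>v w = transpose_mat Db *\<^sub>v (H *\<^sub>v (Db *\<^sub>v w))"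
    unfolding G_def using Db H w by (simp add: assoc_mult_mat_vec[of _ "2*n+m" "2*n+m+T" _ "2*n+m"]
        assoc_mult_mat_vec[of _ "2*n+m+T" "2*n+m+T" _ "2*n+m"])
  also have "w \<bullet> (transpose_mat Db *\<^sub>v (H *\<^sub>v (Db *\<^sub>v w))) = (Db *\<^sub>v w) \<bullet> (H *\<^sub>v (Db *\<^sub>v w))"
  proof -
    have z: "H *\<^sub>v (Db *\<^sub>v w) \<in> carrier_vec (2*n+m+T)" using H Db w by simp
    have "(transpose_mat Db *\<^sub>v (H *\<^sub>v (Db *\<^sub>v w))) \<bullet> w = (H *\<^sub>v (Db *\<^sub>v w)) \<bullet> (Db *\<^sub>v w)"
      by (rule transpose_vec_mult_scalar[OF Db w z])
    then show ?thesis using comm_scalar_prod[of w "2*n+m"] comm_scalar_prod[of "Db *\<^sub>v w" "2*n+m+T"] Db w z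
      by (metis mult_mat_vec_carrier transpose_carrier_mat)
  qed
  also have "Db *\<^sub>v w = w @\<^sub>v (Hc *\<^sub>v w)" unfolding Db_eq using vcat_mult_vec[OF one_carrier_mat Hc w] w by simp
  also have "(w @\<^sub>v (Hc *\<^sub>v w)) \<bullet> (H *\<^sub>v (w @\<^sub>v (Hc *\<^sub>v w))) = c * (w \<bullet> w) - (Hc *\<^sub>v w) \<bullet> (Hc *\<^sub>v w)"
  proof -
    have r: "Hc *\<^sub>v w \<in> carrier_vec T" using Hc w by simp
    have m1: "(- 1\<^sub>m T) *\<^sub>v (Hc *\<^sub>v w) = - (Hc *\<^sub>v w)" using r Hc
      by (subst uminus_mult_mat_vec) auto
    show ?thesis unfolding H_def bdiag_def
      using fb_bil[of "c \<cdot>\<^sub>m 1\<^sub>m (2*n+m)" "2*n+m" "2*n+m" "0\<^sub>m (2*n+m) T" T "0\<^sub>m T (2*n+m)" T "- 1\<^sub>m T" w "Hc *\<^sub>v w" w "Hc *\<^sub>v w"]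
        r w by (simp add: smult_mat_mult_vec[of _ "2*n+m" "2*n+m"] scalar_prod_smult_distrib[of _ "2*n+m"]
          m1 scalar_prod_uminus_right)
  qed
  also have "w \<bullet> w = x \<bullet> x + a \<bullet> a + b \<bullet> b" unfolding w_def using x a b
    by (simp add: scalar_prod_append[of _ "n+n" _ m] scalar_prod_append[of _ n _ n])
  finally show ?thesis unfolding c_def w_def[symmetric] Hc_def[symmetric] w' by simp
qed


lemma cs_sum:
  fixes a b :: "nat \<Rightarrow> real"
  shows "(\<Sum>i\<in>I. a i * b i)^2 \<le> (\<Sum>i\<in>I. (a i)^2) * (\<Sum>i\<in>I. (b i)^2)"
proof (cases "(\<Sum>i\<in>I. (b i)^2) > 0")
  case False
  show ?thesis
  proof (cases "finite I")
    case fin: True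
    have nn: "0 \<le> (\<Sum>i\<in>I. (b i)^2)" by (rule sum_nonneg) simp
    hence z: "(\<Sum>i\<in>I. (b i)^2) = 0" using False by linarith
    have "\<forall>i\<in>I. (b i)^2 = 0" using fin z sum_nonneg_eq_0_iff[of I "\<lambda>i. (b i)^2"] by simp
    hence "(\<Sum>i\<in>I. a i * b i) = 0" by simp
    then show ?thesis by (simp, intro mult_nonneg_nonneg sum_nonneg) auto
  next
    case False
    then show ?thesis by simp
  qed
next
  case True
  define r where "r \<equiv> (\<Sum>i\<in>I. a i * b i) / (\<Sum>i\<in>I. (b i)^2)"
  have "0 \<le> (\<Sum>i\<in>I. (a i - r * b i)^2)"
    by (rule sum_nonneg) simp
  also have "\<dots> = (\<Sum>i\<in>I. (a i)^2 - 2 * r * (a i * b i) + r^2 * (b i)^2)"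
    by (rule sum.cong) (auto simp: power2_eq_square algebra_simps)
  also have "... = (\<Sum>i\<in>I. (a i)^2) - 2 * r * (\<Sum>i\<in>I. a i * b i) + r^2 * (\<Sum>i\<in>I. (b i)^2)"
    by (simp add: sum.distrib sum_subtractf sum_distrib_left)
  also have "\<dots> = (\<Sum>i\<in>I. (a i)^2) - ((\<Sum>i\<in>I. a i * b i))^2 / (\<Sum>i\<in>I. (b i)^2)"
    by (simp add: r_def power2_eq_square)
  finally have "0 \<le> (\<Sum>i\<in>I. (a i)^2) - ((\<Sum>i\<in>I. a i * b i))^2 / (\<Sum>i\<in>I. (b i)^2)" .
  hence "((\<Sum>i\<in>I. a i * b i))^2 / (\<Sum>i\<in>I. (b i)^2) \<le> (\<Sum>i\<in>I. (a i)^2)" by simp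
  thus ?thesis using True by (simp add: pos_divide_le_eq)
qed

lemma r_bound:
  fixes A B X U Z \<Delta> DD :: "real mat"
  assumes A: "A \<in> carrier_mat n n" and B: "B \<in> carrier_mat n m"
    and X: "X \<in> carrier_mat n T" and U: "U \<in> carrier_mat m T"
    and Z: "Z = A * X + B * U" and Dl: "\<Delta> \<in> carrier_mat (2*n+m) T"
    and Dle: "\<forall>i<2*n+m. \<forall>j<T. \<bar>\<Delta> $$ (i,j)\<bar> \<le> eps"
    and DD: "DD = vcat Z (vcat X U) + \<Delta>"
    and x: "x \<in> carrier_vec n"
  shows "(hcat (transpose_mat (Zd n m DD)) (hcat (- transpose_mat (Xd n m DD)) (- transpose_mat (Ud n m DD)))
          *\<^sub>v (x @\<^sub>v (transpose_mat A *\<^sub>v x @\<^sub>v transpose_mat B *\<^sub>v x))) \<bullet>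
         (hcat (transpose_mat (Zd n m DD)) (hcat (- transpose_mat (Xd n m DD)) (- transpose_mat (Ud n m DD)))
          *\<^sub>v (x @\<^sub>v (transpose_mat A *\<^sub>v x @\<^sub>v transpose_mat B *\<^sub>v x)))
      \<le> eps^2 * real ((2*n+m) * T) * (x \<bullet> x + (transpose_mat A *\<^sub>v x) \<bullet> (transpose_mat A *\<^sub>v x)
            + (transpose_mat B *\<^sub>v x) \<bullet> (transpose_mat B *\<^sub>v x))"
proof -
  define a where "a = transpose_mat A *\<^sub>v x"
  define b where "b = transpose_mat B *\<^sub>v x"
  have a: "a \<in> carrier_vec n" and b: "b \<in> carrier_vec m" unfolding a_def b_def using A B x by auto
  have Zc: "Z \<in> carrier_mat n T" using Z A B X U by auto
  have DDc: "DD \<in> carrier_mat (2*n+m) T" unfolding DD using Zc X U Dl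
    by (metis add_carrier_mat mult_2 vcat_carrier add.assoc)
  define Hc where "Hc = hcat (transpose_mat (Zd n m DD)) (hcat (- transpose_mat (Xd n m DD)) (- transpose_mat (Ud n m DD)))"
  define r where "r = Hc *\<^sub>v (x @\<^sub>v (a @\<^sub>v b))"
  define vv where "vv = x @\<^sub>v ((- a) @\<^sub>v (- b))"
  have vv: "vv \<in> carrier_vec (2*n+m)" unfolding vv_def using x a b by (simp add: mult_2 add.assoc)
  have Hcc: "Hc \<in> carrier_mat T (2*n+m)" unfolding Hc_def using DDc Zd_carrier Xd_carrier Ud_carrier
    by (metis add.assoc hcat_carrier mult_2 transpose_carrier_mat uminus_carrier_iff_mat)
  have r: "r \<in> carrier_vec T" unfolding r_def using Hcc x a b by (simp add: mult_2 add.assoc)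
  have ZT: "transpose_mat Z *\<^sub>v x = transpose_mat X *\<^sub>v a + transpose_mat U *\<^sub>v b"
  proof -
    have "transpose_mat Z = transpose_mat X * transpose_mat A + transpose_mat U * transpose_mat B"
    proof -
      have "transpose_mat (A*X + B*U) = transpose_mat (A*X) + transpose_mat (B*U)"
        by (rule transpose_add[of _ n T]) (use A B X U in auto)
      also have "transpose_mat (A*X) = transpose_mat X * transpose_mat A" by (rule transpose_mult[OF A X])
      also have "transpose_mat (B*U) = transpose_mat U * transpose_mat B" by (rule transpose_mult[OF B U])
      finally show ?thesis unfolding Z .
    qed
    then show ?thesis unfolding a_def b_def using A B X U x
      by (simp add: add_mult_distrib_mat_vec[of _ T n] assoc_mult_mat_vec[of _ T n _ n]
          assoc_mult_mat_vec[of _ T m _ n])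
  qed
  have rj: "r $ j = (\<Sum>k<2*n+m. \<Delta> $$ (k,j) * vv $ k)" if j: "j < T" for j
  proof -
    have "r $ j = (\<Sum>k<2*n+m. DD $$ (k,j) * vv $ k)"
      unfolding r_def Hc_def vv_def by (rule Hc_entry[OF DDc x a b j])
    also have "\<dots> = (\<Sum>k<2*n+m. (vcat Z (vcat X U)) $$ (k,j) * vv $ k + \<Delta> $$ (k,j) * vv $ k)"
    proof (rule sum.cong)
      fix k assume "k \<in> {..<2*n+m}"
      then have k: "k < 2*n+m" by simp
      have "DD $$ (k,j) = (vcat Z (vcat X U)) $$ (k,j) + \<Delta> $$ (k,j)"
        unfolding DD using k j Dl by simp
      then show "DD $$ (k,j) * vv $ k = (vcat Z (vcat X U)) $$ (k,j) * vv $ k + \<Delta> $$ (k,j) * vv $ k"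
        by (simp add: distrib_right)
    qed simp
    also have "\<dots> = (\<Sum>k<2*n+m. (vcat Z (vcat X U)) $$ (k,j) * vv $ k) + (\<Sum>k<2*n+m. \<Delta> $$ (k,j) * vv $ k)"
      by (rule sum.distrib)
    also have "(\<Sum>k<2*n+m. (vcat Z (vcat X U)) $$ (k,j) * vv $ k) = 0"
    proof -
      have "(\<Sum>k<2*n+m. (vcat Z (vcat X U)) $$ (k,j) * vv $ k) = (\<Sum>k<n+(n+m). (vcat Z (vcat X U)) $$ (k,j) * vv $ k)"
        by (simp add: mult_2 add.assoc)
      also have "\<dots> = (\<Sum>k<n. Z $$ (k,j) * x $ k) - (\<Sum>k<n. X $$ (k,j) * a $ k) - (\<Sum>k<m. U $$ (k,j) * b $ k)"
        unfolding sum_split_nat using Zc X U j x a b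
        by (simp add: vcat_def vv_def sum_negf)
      also have "(\<Sum>k<n. Z $$ (k,j) * x $ k) = (transpose_mat Z *\<^sub>v x) $ j"
      proof -
        have "(transpose_mat Z *\<^sub>v x) $ j = (\<Sum>k<n. transpose_mat Z $$ (j,k) * x $ k)"
          by (rule mat_vec_index_sum[of _ T n]) (use Zc x j in auto)
        also have "\<dots> = (\<Sum>k<n. Z $$ (k,j) * x $ k)" by (rule sum.cong) (use Zc j in auto)
        finally show ?thesis by (rule sym)
      qed
      also have "\<dots> = (\<Sum>k<n. X $$ (k,j) * a $ k) + (\<Sum>k<m. U $$ (k,j) * b $ k)"
      proof -
        have "(transpose_mat X *\<^sub>v a + transpose_mat U *\<^sub>v b) $ j = (transpose_mat X *\<^sub>v a) $ j + (transpose_mat U *\<^sub>v b) $ j"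
          by (rule index_add_vec) (use U b j in auto)
        also have "(transpose_mat X *\<^sub>v a) $ j = (\<Sum>k<n. transpose_mat X $$ (j,k) * a $ k)"
          by (rule mat_vec_index_sum[of _ T n]) (use X a j in auto)
        also have "\<dots> = (\<Sum>k<n. X $$ (k,j) * a $ k)" by (rule sum.cong) (use X j in auto)
        also have "(transpose_mat U *\<^sub>v b) $ j = (\<Sum>k<m. transpose_mat U $$ (j,k) * b $ k)"
          by (rule mat_vec_index_sum[of _ T m]) (use U b j in auto)
        also have "\<dots> = (\<Sum>k<m. U $$ (k,j) * b $ k)" by (rule sum.cong) (use U j in auto)
        finally show ?thesis unfolding ZT .
      qed
      finally show ?thesis by simp
    qed
    finally show ?thesis by simp
  qed
  have vvn: "vv \<bullet> vv = x \<bullet> x + a \<bullet> a + b \<bullet> b"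
  proof -
    have ma: "- a \<in> carrier_vec n" and mb: "- b \<in> carrier_vec m" using a b by auto
    have ab: "(- a) @\<^sub>v (- b) \<in> carrier_vec (n+m)" using ma mb by simp
    have "vv \<bullet> vv = x \<bullet> x + ((- a) @\<^sub>v (- b)) \<bullet> ((- a) @\<^sub>v (- b))"
      unfolding vv_def by (rule scalar_prod_append[OF x ab x ab])
    also have "((- a) @\<^sub>v (- b)) \<bullet> ((- a) @\<^sub>v (- b)) = (- a) \<bullet> (- a) + (- b) \<bullet> (- b)"
      by (rule scalar_prod_append[OF ma mb ma mb])
    also have "(- a) \<bullet> (- a) = a \<bullet> a" using a by (simp add: scalar_prod_uminus_left scalar_prod_uminus_right)
    also have "(- b) \<bullet> (- b) = b \<bullet> b" using b by (simp add: scalar_prod_uminus_left scalar_prod_uminus_right)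
    finally show ?thesis by simp
  qed
  have sq: "(r $ j)^2 \<le> (real (2*n+m) * eps^2) * (vv \<bullet> vv)" if j: "j < T" for j
  proof -
    have h1: "(r $ j)^2 \<le> (\<Sum>k<2*n+m. (\<Delta> $$ (k,j))^2) * (\<Sum>k<2*n+m. (vv $ k)^2)"
      unfolding rj[OF j] by (rule cs_sum)
    have h2: "(\<Sum>k<2*n+m. (vv $ k)^2) = vv \<bullet> vv" using vv
      by (simp add: scalar_prod_def lessThan_atLeast0 power2_eq_square)
    have h3: "(\<Sum>k<2*n+m. (\<Delta> $$ (k,j))^2) \<le> (\<Sum>k<2*n+m. eps^2)"
    proof (rule sum_mono)
      fix k assume "k \<in> {..<2*n+m}"
      hence "\<bar>\<Delta> $$ (k,j)\<bar> \<le> eps" using Dle j by auto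
      then have "\<bar>\<Delta> $$ (k,j)\<bar>^2 \<le> eps^2" by (rule power_mono) simp
      then show "(\<Delta> $$ (k,j))^2 \<le> eps^2" by simp
    qed
    have h4: "(\<Sum>k<2*n+m. eps^2) = real (2*n+m) * eps^2" by simp
    have h5: "0 \<le> vv \<bullet> vv" unfolding h2[symmetric] by (rule sum_nonneg) simp
    have "(r $ j)^2 \<le> (\<Sum>k<2*n+m. (\<Delta> $$ (k,j))^2) * (vv \<bullet> vv)" using h1 h2 by simp
    also have "\<dots> \<le> (real (2*n+m) * eps^2) * (vv \<bullet> vv)"
      by (rule mult_right_mono) (use h3 h4 h5 in auto)
    finally show ?thesis .
  qed
  have "r \<bullet> r = (\<Sum>j<T. (r $ j)^2)" using r by (simp add: scalar_prod_def lessThan_atLeast0 power2_eq_square)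
  also have "\<dots> \<le> (\<Sum>j<T. (real (2*n+m) * eps^2) * (vv \<bullet> vv))" by (rule sum_mono) (use sq in auto)
  also have "\<dots> = eps^2 * real ((2*n+m) * T) * (x \<bullet> x + a \<bullet> a + b \<bullet> b)" using vvn by simp
  finally show ?thesis unfolding r_def Hc_def a_def b_def .
qed


lemma bdiag_carrier: "M \<in> carrier_mat a a' \<Longrightarrow> N \<in> carrier_mat b b' \<Longrightarrow> bdiag M N \<in> carrier_mat (a+b) (a'+b')"
  unfolding bdiag_def by (rule four_block_carrier_mat)

lemma N_carrier:
  fixes DD :: "real mat"
  assumes DD: "DD \<in> carrier_mat (2*n+m) T"
  shows "N_mat n m T eps DD \<in> carrier_mat (2*n+m+n) (2*n+m+n)"
proof -
  have Z: "Zd n m DD \<in> carrier_mat n T" and X: "Xd n m DD \<in> carrier_mat n T" and U: "Ud n m DD \<in> carrier_mat m T"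
    using DD Zd_carrier Xd_carrier Ud_carrier by auto
  define Hc where "Hc = hcat (transpose_mat (Zd n m DD)) (hcat (- transpose_mat (Xd n m DD)) (- transpose_mat (Ud n m DD)))"
  have Hc: "Hc \<in> carrier_mat T (2*n+m)" using Z X U unfolding Hc_def
    by (metis add.assoc hcat_carrier mult_2 transpose_carrier_mat uminus_carrier_iff_mat)
  have Db: "Dbar n m DD \<in> carrier_mat (2*n+m+T) (2*n+m)" unfolding Dbar_def Hc_def[symmetric] Let_def
    using Hc by simp
  have H: "bdiag ((eps^2 * real ((2*n+m) * T)) \<cdot>\<^sub>m 1\<^sub>m (2*n+m)) (- 1\<^sub>m T) \<in> carrier_mat (2*n+m+T) (2*n+m+T)"
    unfolding bdiag_def by auto
  have G: "transpose_mat (Dbar n m DD) * bdiag ((eps^2 * real ((2*n+m) * T)) \<cdot>\<^sub>m 1\<^sub>m (2*n+m)) (- 1\<^sub>m T) * Dbar n m DD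
     \<in> carrier_mat (2*n+m) (2*n+m)" using Db H by auto
  show ?thesis unfolding N_mat_def by (rule bdiag_carrier[OF G zero_carrier_mat])
qed

lemma robust_lyap:
  fixes A B X U Z \<Delta> L Pinv DD :: "real mat" and x :: "real vec"
  assumes A: "A \<in> carrier_mat n n" and B: "B \<in> carrier_mat n m"
    and X: "X \<in> carrier_mat n T" and U: "U \<in> carrier_mat m T"
    and Z: "Z = A * X + B * U" and Dl: "\<Delta> \<in> carrier_mat (2*n+m) T"
    and Dle: "\<forall>i<2*n+m. \<forall>j<T. \<bar>\<Delta> $$ (i,j)\<bar> \<le> eps"
    and DD: "DD = vcat Z (vcat X U) + \<Delta>"
    and L: "L \<in> carrier_mat T n"
    and rob: "psd (robust_mat n m L \<beta> DD - \<alpha> \<cdot>\<^sub>m N_mat n m T eps DD)"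
    and al: "0 \<le> \<alpha>" and be: "1 \<le> \<beta>"
    and Ps: "transpose_mat (Xd n m DD * L) = Xd n m DD * L"
    and Pinv: "Pinv \<in> carrier_mat n n" and PiP: "Pinv * (Xd n m DD * L) = 1\<^sub>m n"
    and x: "x \<in> carrier_vec n"
  shows "x \<bullet> x \<le> x \<bullet> ((Xd n m DD * L) *\<^sub>v x)
     - (transpose_mat (A + B * (Ud n m DD * L * Pinv)) *\<^sub>v x) \<bullet>
       ((Xd n m DD * L) *\<^sub>v (transpose_mat (A + B * (Ud n m DD * L * Pinv)) *\<^sub>v x))"
proof -
  have Zc: "Z \<in> carrier_mat n T" using Z A B X U by auto
  have DDc: "DD \<in> carrier_mat (2*n+m) T" unfolding DD using Zc X U Dl
    by (metis add_carrier_mat mult_2 vcat_carrier add.assoc)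
  define Xh where "Xh = Xd n m DD"
  define Uh where "Uh = Ud n m DD"
  have Xh: "Xh \<in> carrier_mat n T" and Uh: "Uh \<in> carrier_mat m T"
    unfolding Xh_def Uh_def using DDc Xd_carrier Ud_carrier by auto
  define P where "P = Xh * L"
  define G1 where "G1 = Uh * L"
  define K where "K = G1 * Pinv"
  have P: "P \<in> carrier_mat n n" unfolding P_def using Xh L by simp
  have G1: "G1 \<in> carrier_mat m n" unfolding G1_def using Uh L by simp
  have K: "K \<in> carrier_mat m n" unfolding K_def using G1 Pinv by simp
  have PS: "transpose_mat P = P" using Ps unfolding P_def Xh_def .
  have KP: "K * P = G1"
  proof -
    have "K * P = G1 * (Pinv * P)" unfolding K_def by (rule assoc_mult_mat[OF G1 Pinv P])
    also have "Pinv * P = 1\<^sub>m n" using PiP unfolding P_def Xh_def .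
    finally show ?thesis using G1 by simp
  qed
  have G1T: "transpose_mat G1 = P * transpose_mat K"
  proof -
    have "transpose_mat G1 = transpose_mat (K * P)" using KP by simp
    also have "\<dots> = transpose_mat P * transpose_mat K" by (rule transpose_mult[OF K P])
    finally show ?thesis using PS by simp
  qed
  have LU: "transpose_mat L * transpose_mat Uh = transpose_mat G1"
    unfolding G1_def by (rule transpose_mult[OF Uh L, symmetric])
  define a where "a = transpose_mat A *\<^sub>v x"
  define b where "b = transpose_mat B *\<^sub>v x"
  define k where "k = transpose_mat K *\<^sub>v b"
  define y where "y = (-1::real) \<cdot>\<^sub>v k"
  have a: "a \<in> carrier_vec n" and b: "b \<in> carrier_vec m" unfolding a_def b_def using A B x by auto
  have k: "k \<in> carrier_vec n" unfolding k_def using K b by auto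
  have y: "y \<in> carrier_vec n" unfolding y_def using k by auto
  define R where "R = robust_mat n m L \<beta> DD"
  define N where "N = N_mat n m T eps DD"
  have Req: "R = block4 (P - \<beta> \<cdot>\<^sub>m 1\<^sub>m n) (0\<^sub>m n n) (0\<^sub>m n m) (0\<^sub>m n n)
             (0\<^sub>m n n) (- P) (- transpose_mat G1) (0\<^sub>m n n)
             (0\<^sub>m m n) (- G1) (0\<^sub>m m m) G1
             (0\<^sub>m n n) (0\<^sub>m n n) (transpose_mat G1) P"
    unfolding R_def robust_mat_def Let_def Xh_def[symmetric] Uh_def[symmetric] P_def[symmetric]
      G1_def[symmetric] LU ..
  define w where "w = (x @\<^sub>v a) @\<^sub>v (b @\<^sub>v y)"
  have w: "w \<in> carrier_vec (n+n+(m+n))" unfolding w_def using x a b y by simp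
  have c1: "P - \<beta> \<cdot>\<^sub>m 1\<^sub>m n \<in> carrier_mat n n" by (rule minus_carrier_mat) simp
  have c2: "- P \<in> carrier_mat n n" "- transpose_mat G1 \<in> carrier_mat n m" "- G1 \<in> carrier_mat m n"
    "transpose_mat G1 \<in> carrier_mat n m" using P G1 by auto
  have Rq: "w \<bullet> (R *\<^sub>v w) = x \<bullet> ((P - \<beta> \<cdot>\<^sub>m 1\<^sub>m n) *\<^sub>v x) + a \<bullet> ((- P) *\<^sub>v a)
      + a \<bullet> ((- transpose_mat G1) *\<^sub>v b) + b \<bullet> ((- G1) *\<^sub>v a) + b \<bullet> (G1 *\<^sub>v y)
      + y \<bullet> (transpose_mat G1 *\<^sub>v b) + y \<bullet> (P *\<^sub>v y)"
    unfolding Req w_def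
    apply (subst block4_qf[OF c1 zero_carrier_mat zero_carrier_mat zero_carrier_mat
          zero_carrier_mat c2(1) c2(2) zero_carrier_mat zero_carrier_mat c2(3) zero_carrier_mat G1
          zero_carrier_mat zero_carrier_mat c2(4) P x a b y])
    using x a b y by simp
  have t1: "x \<bullet> ((P - \<beta> \<cdot>\<^sub>m 1\<^sub>m n) *\<^sub>v x) = x \<bullet> (P *\<^sub>v x) - \<beta> * (x \<bullet> x)"
  proof -
    have "(P - \<beta> \<cdot>\<^sub>m 1\<^sub>m n) *\<^sub>v x = P *\<^sub>v x - \<beta> \<cdot>\<^sub>v x"
      using P x by (simp add: minus_mult_distrib_mat_vec[of _ n n] smult_mat_mult_vec[of _ n n])
    then show ?thesis using P x by (simp add: scalar_prod_minus_distrib[of _ n] scalar_prod_smult_distrib[of _ n])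
  qed
  have PMv: "\<And>v. v \<in> carrier_vec n \<Longrightarrow> (- P) *\<^sub>v v = - (P *\<^sub>v v)" using P by (intro uminus_mult_mat_vec) auto
  have t2: "a \<bullet> ((- P) *\<^sub>v a) = - (a \<bullet> (P *\<^sub>v a))"
    using PMv[OF a] P a by (simp add: scalar_prod_uminus_right)
  have G1Tb: "transpose_mat G1 *\<^sub>v b = P *\<^sub>v k"
    unfolding G1T k_def using P K b by (simp add: assoc_mult_mat_vec[of _ n n _ m])
  have t3: "a \<bullet> ((- transpose_mat G1) *\<^sub>v b) = - (a \<bullet> (P *\<^sub>v k))"
  proof -
    have "(- transpose_mat G1) *\<^sub>v b = - (transpose_mat G1 *\<^sub>v b)" using G1 b by (intro uminus_mult_mat_vec) auto
    then show ?thesis using G1Tb P a k by (simp add: scalar_prod_uminus_right)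
  qed
  have G1v: "\<And>v. v \<in> carrier_vec n \<Longrightarrow> G1 *\<^sub>v v = K *\<^sub>v (P *\<^sub>v v)"
    unfolding KP[symmetric] using K P by (simp add: assoc_mult_mat_vec[of _ m n _ n])
  have bK: "\<And>v. v \<in> carrier_vec n \<Longrightarrow> b \<bullet> (K *\<^sub>v (P *\<^sub>v v)) = k \<bullet> (P *\<^sub>v v)"
  proof -
    fix v :: "real vec" assume v: "v \<in> carrier_vec n"
    have Pv: "P *\<^sub>v v \<in> carrier_vec n" using P v by simp
    show "b \<bullet> (K *\<^sub>v (P *\<^sub>v v)) = k \<bullet> (P *\<^sub>v v)"
      unfolding k_def using transpose_vec_mult_scalar[OF K Pv b] by simp
  qed
  have t4: "b \<bullet> ((- G1) *\<^sub>v a) = - (a \<bullet> (P *\<^sub>v k))"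
  proof -
    have "(- G1) *\<^sub>v a = - (G1 *\<^sub>v a)" using G1 a by (intro uminus_mult_mat_vec) auto
    then have "b \<bullet> ((- G1) *\<^sub>v a) = - (b \<bullet> (G1 *\<^sub>v a))" using G1 a b by (simp add: scalar_prod_uminus_right)
    also have "b \<bullet> (G1 *\<^sub>v a) = k \<bullet> (P *\<^sub>v a)" using G1v[OF a] bK[OF a] by simp
    also have "\<dots> = a \<bullet> (P *\<^sub>v k)" by (rule bil_sym[OF P PS a k])
    finally show ?thesis .
  qed
  have Py: "P *\<^sub>v y = (-1::real) \<cdot>\<^sub>v (P *\<^sub>v k)" unfolding y_def using P k by (simp add: mult_mat_vec[of _ n n])
  have t5: "b \<bullet> (G1 *\<^sub>v y) = - (k \<bullet> (P *\<^sub>v k))"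
    using G1v[OF y] bK[OF y] Py P k by (simp add: scalar_prod_smult_distrib[of _ n])
  have t6: "y \<bullet> (transpose_mat G1 *\<^sub>v b) = - (k \<bullet> (P *\<^sub>v k))"
    unfolding G1Tb y_def using P k by (simp add: smult_scalar_prod_distrib[of _ n])
  have t7: "y \<bullet> (P *\<^sub>v y) = k \<bullet> (P *\<^sub>v k)"
    unfolding Py unfolding y_def using P k
    by (simp add: smult_scalar_prod_distrib[of _ n] scalar_prod_smult_distrib[of _ n])
  have Rval: "w \<bullet> (R *\<^sub>v w) = x \<bullet> (P *\<^sub>v x) - \<beta> * (x \<bullet> x) - a \<bullet> (P *\<^sub>v a) - 2 * (a \<bullet> (P *\<^sub>v k)) - k \<bullet> (P *\<^sub>v k)"
    unfolding Rq t1 t2 t3 t4 t5 t6 t7 by simp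
  have Ncar: "N \<in> carrier_mat (n+n+(m+n)) (n+n+(m+n))"
  proof -
    have "2*n+m+n = n+n+(m+n)" by simp
    then show ?thesis using N_carrier[OF DDc, of eps] unfolding N_def by metis
  qed
  have Rcar: "R \<in> carrier_mat (n+n+(m+n)) (n+n+(m+n))" unfolding Req block4_def using P G1 by auto
  have Nq: "0 \<le> w \<bullet> (N *\<^sub>v w)"
  proof -
    have w2: "w = ((x @\<^sub>v a) @\<^sub>v b) @\<^sub>v y" unfolding w_def by (rule append_vec_assoc[symmetric])
    have e1: "w \<bullet> (N *\<^sub>v w) = eps^2 * real ((2*n+m) * T) * (x \<bullet> x + a \<bullet> a + b \<bullet> b)
       - (hcat (transpose_mat (Zd n m DD)) (hcat (- transpose_mat (Xd n m DD)) (- transpose_mat (Ud n m DD)))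
          *\<^sub>v (x @\<^sub>v (a @\<^sub>v b))) \<bullet>
         (hcat (transpose_mat (Zd n m DD)) (hcat (- transpose_mat (Xd n m DD)) (- transpose_mat (Ud n m DD)))
          *\<^sub>v (x @\<^sub>v (a @\<^sub>v b)))"
      unfolding w2 N_def by (rule N_qf[OF DDc x a b y])
    have e2: "(hcat (transpose_mat (Zd n m DD)) (hcat (- transpose_mat (Xd n m DD)) (- transpose_mat (Ud n m DD)))
          *\<^sub>v (x @\<^sub>v (a @\<^sub>v b))) \<bullet>
         (hcat (transpose_mat (Zd n m DD)) (hcat (- transpose_mat (Xd n m DD)) (- transpose_mat (Ud n m DD)))
          *\<^sub>v (x @\<^sub>v (a @\<^sub>v b))) \<le> eps^2 * real ((2*n+m) * T) * (x \<bullet> x + a \<bullet> a + b \<bullet> b)"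
      unfolding a_def b_def by (rule r_bound[OF A B X U Z Dl Dle DD x])
    show ?thesis using e1 e2 by simp
  qed
  have psdq: "0 \<le> w \<bullet> ((R - \<alpha> \<cdot>\<^sub>m N) *\<^sub>v w)"
  proof -
    have "dim_row (R - \<alpha> \<cdot>\<^sub>m N) = n+n+(m+n)" using Ncar by simp
    then show ?thesis using rob w unfolding psd_def R_def N_def by auto
  qed
  have "(R - \<alpha> \<cdot>\<^sub>m N) *\<^sub>v w = R *\<^sub>v w - \<alpha> \<cdot>\<^sub>v (N *\<^sub>v w)"
    using Rcar Ncar w by (simp add: minus_mult_distrib_mat_vec[of _ "n+n+(m+n)" "n+n+(m+n)"]
        smult_mat_mult_vec[of _ "n+n+(m+n)" "n+n+(m+n)"])
  then have "w \<bullet> ((R - \<alpha> \<cdot>\<^sub>m N) *\<^sub>v w) = w \<bullet> (R *\<^sub>v w) - \<alpha> * (w \<bullet> (N *\<^sub>v w))"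
    using Rcar Ncar w by (simp add: scalar_prod_minus_distrib[of _ "n+n+(m+n)"] scalar_prod_smult_distrib[of _ "n+n+(m+n)"])
  with psdq Nq al have Rpos: "0 \<le> w \<bullet> (R *\<^sub>v w)"
    by (smt (verit) mult_nonneg_nonneg)
  have McT: "transpose_mat (A + B * K) *\<^sub>v x = a + k"
  proof -
    have "transpose_mat (A + B * K) = transpose_mat A + transpose_mat K * transpose_mat B"
    proof -
      have "transpose_mat (A + B * K) = transpose_mat A + transpose_mat (B * K)"
        by (rule transpose_add) (use A B K in auto)
      also have "transpose_mat (B * K) = transpose_mat K * transpose_mat B" by (rule transpose_mult[OF B K])
      finally show ?thesis .
    qed
    then show ?thesis unfolding a_def k_def b_def using A B K x
      by (simp add: add_mult_distrib_mat_vec[of _ n n] assoc_mult_mat_vec[of _ n m _ n])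
  qed
  have akq: "(a + k) \<bullet> (P *\<^sub>v (a + k)) = a \<bullet> (P *\<^sub>v a) + 2 * (a \<bullet> (P *\<^sub>v k)) + k \<bullet> (P *\<^sub>v k)"
    using bil_comb[OF P PS a k, of 1 1] a k by simp
  have xx: "0 \<le> x \<bullet> x" unfolding scalar_prod_def by (rule sum_nonneg) simp
  have "x \<bullet> x \<le> \<beta> * (x \<bullet> x)" using be xx by (simp add: mult_le_cancel_right1)
  then show ?thesis
    using Rpos Rval akq McT unfolding K_def G1_def Uh_def P_def Xh_def by simp
qed


lemma pow_comm:
  fixes A :: "real mat"
  assumes A: "A \<in> carrier_mat n n"
  shows "A * A ^\<^sub>m k = A ^\<^sub>m k * A"
proof (induction k)
  case 0
  then show ?case using A by simp
next
  case (Suc k)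
  have Ak: "A ^\<^sub>m k \<in> carrier_mat n n" using A by (rule pow_carrier_mat)
  have "A * A ^\<^sub>m Suc k = A * (A ^\<^sub>m k * A)" by simp
  also have "\<dots> = (A * A ^\<^sub>m k) * A" using assoc_mult_mat[OF A Ak A] by simp
  also have "\<dots> = A ^\<^sub>m Suc k * A" using Suc by simp
  finally show ?case .
qed

lemma transpose_pow:
  fixes A :: "real mat"
  assumes A: "A \<in> carrier_mat n n"
  shows "transpose_mat (A ^\<^sub>m k) = (transpose_mat A) ^\<^sub>m k"
proof (induction k)
  case 0
  then show ?case using A by simp
next
  case (Suc k)
  have Ak: "A ^\<^sub>m k \<in> carrier_mat n n" using A by (rule pow_carrier_mat)
  have AT: "transpose_mat A \<in> carrier_mat n n" using A by simp
  have "transpose_mat (A ^\<^sub>m Suc k) = transpose_mat (A ^\<^sub>m k * A)" by simp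
  also have "\<dots> = transpose_mat A * transpose_mat (A ^\<^sub>m k)" by (rule transpose_mult[OF Ak A])
  also have "\<dots> = transpose_mat A * (transpose_mat A) ^\<^sub>m k" using Suc by simp
  also have "\<dots> = (transpose_mat A) ^\<^sub>m k * transpose_mat A" by (rule pow_comm[OF AT])
  finally show ?case by simp
qed

lemma mv_unit_index:
  fixes M :: "real mat"
  assumes M: "M \<in> carrier_mat r n" and i: "i < n" and k: "k < r"
  shows "(M *\<^sub>v unit_vec n i) $ k = M $$ (k,i)"
  using M i k by (simp add: scalar_prod_right_unit)

lemma sp_self: "(v::real vec) \<in> carrier_vec n \<Longrightarrow> v \<bullet> v = (\<Sum>i<n. v $ i * v $ i)"
  by (simp add: scalar_prod_def lessThan_atLeast0)

lemma lyap_iter: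
  fixes Mt P :: "real mat"
  assumes Mt: "Mt \<in> carrier_mat n n" and P: "P \<in> carrier_mat n n"
    and Ppsd: "\<And>x. x \<in> carrier_vec n \<Longrightarrow> 0 \<le> x \<bullet> (P *\<^sub>v x)"
    and lyap: "\<And>x. x \<in> carrier_vec n \<Longrightarrow> x \<bullet> x \<le> x \<bullet> (P *\<^sub>v x) - (Mt *\<^sub>v x) \<bullet> (P *\<^sub>v (Mt *\<^sub>v x))"
  shows "x \<in> carrier_vec n \<Longrightarrow> (\<Sum>t<N. (Mt ^\<^sub>m t *\<^sub>v x) \<bullet> (Mt ^\<^sub>m t *\<^sub>v x)) \<le> x \<bullet> (P *\<^sub>v x)"
proof (induction N arbitrary: x)
  case 0
  then show ?case using Ppsd by simp
next
  case (Suc N)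
  have x: "x \<in> carrier_vec n" by fact
  have Mx: "Mt *\<^sub>v x \<in> carrier_vec n" using Mt x by simp
  have e: "Mt ^\<^sub>m Suc t *\<^sub>v x = Mt ^\<^sub>m t *\<^sub>v (Mt *\<^sub>v x)" for t
  proof -
    have Mtt: "Mt ^\<^sub>m t \<in> carrier_mat n n" using Mt by (rule pow_carrier_mat)
    show ?thesis using assoc_mult_mat_vec[OF Mtt Mt x] by simp
  qed
  have "(\<Sum>t<Suc N. (Mt ^\<^sub>m t *\<^sub>v x) \<bullet> (Mt ^\<^sub>m t *\<^sub>v x)) =
        (Mt ^\<^sub>m 0 *\<^sub>v x) \<bullet> (Mt ^\<^sub>m 0 *\<^sub>v x) + (\<Sum>t<N. (Mt ^\<^sub>m Suc t *\<^sub>v x) \<bullet> (Mt ^\<^sub>m Suc t *\<^sub>v x))"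
    by (rule sum.lessThan_Suc_shift)
  also have "(Mt ^\<^sub>m 0 *\<^sub>v x) \<bullet> (Mt ^\<^sub>m 0 *\<^sub>v x) = x \<bullet> x" using x Mt by simp
  also have "(\<Sum>t<N. (Mt ^\<^sub>m Suc t *\<^sub>v x) \<bullet> (Mt ^\<^sub>m Suc t *\<^sub>v x)) =
      (\<Sum>t<N. (Mt ^\<^sub>m t *\<^sub>v (Mt *\<^sub>v x)) \<bullet> (Mt ^\<^sub>m t *\<^sub>v (Mt *\<^sub>v x)))" unfolding e ..
  also have "\<dots> \<le> (Mt *\<^sub>v x) \<bullet> (P *\<^sub>v (Mt *\<^sub>v x))" by (rule Suc.IH[OF Mx])
  finally show ?case using lyap[OF x] by simp
qed

lemma swap4:
  fixes F :: "nat \<Rightarrow> nat \<Rightarrow> nat \<Rightarrow> nat \<Rightarrow> real"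
  shows "(\<Sum>t\<in>A. \<Sum>i\<in>B. \<Sum>k\<in>C. \<Sum>l\<in>D. F t i k l) = (\<Sum>k\<in>C. \<Sum>l\<in>D. \<Sum>t\<in>A. \<Sum>i\<in>B. F t i k l)"
proof -
  have "(\<Sum>t\<in>A. \<Sum>i\<in>B. \<Sum>k\<in>C. \<Sum>l\<in>D. F t i k l) = (\<Sum>t\<in>A. \<Sum>k\<in>C. \<Sum>i\<in>B. \<Sum>l\<in>D. F t i k l)"
    by (rule sum.cong[OF refl], rule sum.swap)
  also have "\<dots> = (\<Sum>t\<in>A. \<Sum>k\<in>C. \<Sum>l\<in>D. \<Sum>i\<in>B. F t i k l)"
    by (rule sum.cong[OF refl], rule sum.cong[OF refl], rule sum.swap)
  also have "\<dots> = (\<Sum>k\<in>C. \<Sum>t\<in>A. \<Sum>l\<in>D. \<Sum>i\<in>B. F t i k l)" by (rule sum.swap)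
  also have "\<dots> = (\<Sum>k\<in>C. \<Sum>l\<in>D. \<Sum>t\<in>A. \<Sum>i\<in>B. F t i k l)" by (rule sum.cong[OF refl], rule sum.swap)
  finally show ?thesis .
qed

lemma cost_part:
  fixes Mc P Qm :: "real mat"
  assumes Mc: "Mc \<in> carrier_mat n n" and P: "P \<in> carrier_mat n n" and Ps: "transpose_mat P = P"
    and Ppsd: "\<And>x. x \<in> carrier_vec n \<Longrightarrow> 0 \<le> x \<bullet> (P *\<^sub>v x)"
    and lyap: "\<And>x. x \<in> carrier_vec n \<Longrightarrow> x \<bullet> x \<le> x \<bullet> (P *\<^sub>v x)
        - (transpose_mat Mc *\<^sub>v x) \<bullet> (P *\<^sub>v (transpose_mat Mc *\<^sub>v x))"
    and Qm: "Qm \<in> carrier_mat n n" and Qpsd: "\<And>x. x \<in> carrier_vec n \<Longrightarrow> 0 \<le> x \<bullet> (Qm *\<^sub>v x)"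
  shows "(\<Sum>t<N. \<Sum>i<n. (Mc ^\<^sub>m t *\<^sub>v unit_vec n i) \<bullet> (Qm *\<^sub>v (Mc ^\<^sub>m t *\<^sub>v unit_vec n i)))
         \<le> (\<Sum>k<n. \<Sum>l<n. Qm $$ (k,l) * P $$ (l,k))"
proof -
  define M where "M = (\<lambda>t. Mc ^\<^sub>m t)"
  have Mc_t: "M t \<in> carrier_mat n n" for t unfolding M_def using Mc by (rule pow_carrier_mat)
  define Mt where "Mt = transpose_mat Mc"
  have Mt: "Mt \<in> carrier_mat n n" unfolding Mt_def using Mc by simp
  define Y where "Y = (\<lambda>l k. \<Sum>t<N. \<Sum>i<n. M t $$ (l,i) * M t $$ (k,i))"
  define W where "W = (\<lambda>l k. P $$ (l,k) - Y l k)"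
  define Qf where "Qf = (\<lambda>k l. Qm $$ (k,l))"
  have lhs: "(\<Sum>t<N. \<Sum>i<n. (Mc ^\<^sub>m t *\<^sub>v unit_vec n i) \<bullet> (Qm *\<^sub>v (Mc ^\<^sub>m t *\<^sub>v unit_vec n i)))
        = (\<Sum>k<n. \<Sum>l<n. Qf k l * Y l k)"
  proof -
    have "(Mc ^\<^sub>m t *\<^sub>v unit_vec n i) \<bullet> (Qm *\<^sub>v (Mc ^\<^sub>m t *\<^sub>v unit_vec n i))
        = (\<Sum>k<n. \<Sum>l<n. M t $$ (k,i) * Qm $$ (k,l) * M t $$ (l,i))" if i: "i < n" for t i
    proof -
      have v: "Mc ^\<^sub>m t *\<^sub>v unit_vec n i \<in> carrier_vec n" using Mc_t[of t] unfolding M_def by simp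
      have "(Mc ^\<^sub>m t *\<^sub>v unit_vec n i) \<bullet> (Qm *\<^sub>v (Mc ^\<^sub>m t *\<^sub>v unit_vec n i))
         = (\<Sum>k<n. \<Sum>l<n. (Mc ^\<^sub>m t *\<^sub>v unit_vec n i) $ k * Qm $$ (k,l) * (Mc ^\<^sub>m t *\<^sub>v unit_vec n i) $ l)"
        by (rule qf_sum[OF Qm v v])
      also have "\<dots> = (\<Sum>k<n. \<Sum>l<n. M t $$ (k,i) * Qm $$ (k,l) * M t $$ (l,i))"
        using mv_unit_index[OF Mc_t[of t] i] unfolding M_def by simp
      finally show ?thesis .
    qed
    then have "(\<Sum>t<N. \<Sum>i<n. (Mc ^\<^sub>m t *\<^sub>v unit_vec n i) \<bullet> (Qm *\<^sub>v (Mc ^\<^sub>m t *\<^sub>v unit_vec n i)))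
        = (\<Sum>t<N. \<Sum>i<n. \<Sum>k<n. \<Sum>l<n. M t $$ (k,i) * Qm $$ (k,l) * M t $$ (l,i))" by simp
    also have "\<dots> = (\<Sum>k<n. \<Sum>l<n. \<Sum>t<N. \<Sum>i<n. M t $$ (k,i) * Qm $$ (k,l) * M t $$ (l,i))"
      by (rule swap4)
    also have "\<dots> = (\<Sum>k<n. \<Sum>l<n. Qf k l * Y l k)"
      unfolding Qf_def Y_def by (simp add: sum_distrib_left mult.commute mult.left_commute)
    finally show ?thesis .
  qed
  have Qfpsd: "0 \<le> qfun n Qf x" for x
  proof -
    have v: "vec n x \<in> carrier_vec n" by simp
    have "vec n x \<bullet> (Qm *\<^sub>v vec n x) = (\<Sum>k<n. \<Sum>l<n. vec n x $ k * Qm $$ (k,l) * vec n x $ l)"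
      by (rule qf_sum[OF Qm v v])
    also have "\<dots> = qfun n Qf x" unfolding qfun_def Qf_def by simp
    finally show ?thesis using Qpsd[OF v] by simp
  qed
  have Wsym: "\<forall>i<n. \<forall>j<n. W i j = W j i"
  proof (intro allI impI)
    fix i j assume i: "i < n" and j: "j < n"
    have "P $$ (i,j) = P $$ (j,i)" using Ps i j P by (metis carrier_matD index_transpose_mat(1))
    then show "W i j = W j i" unfolding W_def Y_def by (simp add: mult.commute)
  qed
  have Wpsd: "\<forall>x. 0 \<le> qfun n W x"
  proof
    fix x :: "nat \<Rightarrow> real"
    define xv where "xv = vec n x"
    have xv: "xv \<in> carrier_vec n" unfolding xv_def by simp
    have qP: "qfun n (\<lambda>l k. P $$ (l,k)) x = xv \<bullet> (P *\<^sub>v xv)"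
      using qf_sum[OF P xv xv] unfolding qfun_def xv_def by simp
    have Mtt: "Mt ^\<^sub>m t \<in> carrier_mat n n" for t using Mt by (rule pow_carrier_mat)
    have comp: "(Mt ^\<^sub>m t *\<^sub>v xv) $ i = (\<Sum>l<n. x l * M t $$ (l,i))" if i: "i < n" for t i
    proof -
      have "(Mt ^\<^sub>m t *\<^sub>v xv) $ i = (\<Sum>l<n. (Mt ^\<^sub>m t) $$ (i,l) * xv $ l)"
        by (rule mat_vec_index_sum[OF Mtt xv i])
      also have "\<dots> = (\<Sum>l<n. x l * M t $$ (l,i))"
      proof (rule sum.cong[OF refl])
        fix l assume "l \<in> {..<n}"
        hence l: "l < n" by simp
        have "(Mt ^\<^sub>m t) $$ (i,l) = (transpose_mat (M t)) $$ (i,l)"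
          unfolding Mt_def M_def using transpose_pow[OF Mc, of t] by simp
        also have "\<dots> = M t $$ (l,i)" using Mc_t[of t] i l by simp
        finally show "(Mt ^\<^sub>m t) $$ (i,l) * xv $ l = x l * M t $$ (l,i)" unfolding xv_def using l by simp
      qed
      finally show ?thesis .
    qed
    have qY: "qfun n Y x = (\<Sum>t<N. (Mt ^\<^sub>m t *\<^sub>v xv) \<bullet> (Mt ^\<^sub>m t *\<^sub>v xv))"
    proof -
      have "qfun n Y x = (\<Sum>l<n. \<Sum>k<n. \<Sum>t<N. \<Sum>i<n. x l * M t $$ (l,i) * (x k * M t $$ (k,i)))"
        unfolding qfun_def Y_def by (simp add: sum_distrib_left sum_distrib_right mult.commute mult.left_commute)
      also have "\<dots> = (\<Sum>t<N. \<Sum>i<n. \<Sum>l<n. \<Sum>k<n. x l * M t $$ (l,i) * (x k * M t $$ (k,i)))"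
        by (rule swap4[symmetric])
      also have "\<dots> = (\<Sum>t<N. \<Sum>i<n. (\<Sum>l<n. x l * M t $$ (l,i)) * (\<Sum>k<n. x k * M t $$ (k,i)))"
        by (simp add: sum_product)
      also have "\<dots> = (\<Sum>t<N. \<Sum>i<n. (Mt ^\<^sub>m t *\<^sub>v xv) $ i * (Mt ^\<^sub>m t *\<^sub>v xv) $ i)"
        using comp by simp
      also have "\<dots> = (\<Sum>t<N. (Mt ^\<^sub>m t *\<^sub>v xv) \<bullet> (Mt ^\<^sub>m t *\<^sub>v xv))"
        by (rule sum.cong[OF refl], rule sp_self[symmetric]) (use Mtt xv in \<open>auto intro: mult_mat_vec_carrier\<close>)
      finally show ?thesis .
    qed
    have "(\<Sum>t<N. (Mt ^\<^sub>m t *\<^sub>v xv) \<bullet> (Mt ^\<^sub>m t *\<^sub>v xv)) \<le> xv \<bullet> (P *\<^sub>v xv)"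
      by (rule lyap_iter[OF Mt P Ppsd _ xv]) (use lyap in \<open>auto simp: Mt_def\<close>)
    moreover have "qfun n W x = qfun n (\<lambda>l k. P $$ (l,k)) x - qfun n Y x"
      unfolding qfun_def W_def by (simp add: algebra_simps sum_subtractf)
    ultimately show "0 \<le> qfun n W x" using qP qY by simp
  qed
  have "0 \<le> (\<Sum>k<n. \<Sum>l<n. Qf k l * W l k)" by (rule trace_nonneg_fun[OF Qfpsd Wsym Wpsd])
  also have "(\<Sum>k<n. \<Sum>l<n. Qf k l * W l k) = (\<Sum>k<n. \<Sum>l<n. Qm $$ (k,l) * P $$ (l,k)) - (\<Sum>k<n. \<Sum>l<n. Qf k l * Y l k)"
    unfolding W_def Qf_def by (simp add: algebra_simps sum_subtractf)
  finally show ?thesis unfolding lhs by simp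
qed


lemma mtrace_mult:
  fixes Q P :: "real mat"
  assumes Q: "Q \<in> carrier_mat n n" and P: "P \<in> carrier_mat n n"
  shows "mtrace (Q * P) = (\<Sum>k<n. \<Sum>l<n. Q $$ (k,l) * P $$ (l,k))"
  unfolding mtrace_def using Q P by (auto simp: scalar_prod_def lessThan_atLeast0 intro!: sum.cong)

lemma cost_final:
  fixes A B K Q R V P S :: "real mat"
  assumes A: "A \<in> carrier_mat n n" and B: "B \<in> carrier_mat n m" and K: "K \<in> carrier_mat m n"
    and Q: "Q \<in> carrier_mat n n" and Qpsd: "\<And>x. x \<in> carrier_vec n \<Longrightarrow> 0 \<le> x \<bullet> (Q *\<^sub>v x)"
    and V: "V \<in> carrier_mat m m" and Vs: "transpose_mat V = V" and VR: "V * V = R"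
    and P: "P \<in> carrier_mat n n" and Ps: "transpose_mat P = P"
    and Ppsd: "\<And>x. x \<in> carrier_vec n \<Longrightarrow> 0 \<le> x \<bullet> (P *\<^sub>v x)"
    and lyap: "\<And>x. x \<in> carrier_vec n \<Longrightarrow> x \<bullet> x \<le> x \<bullet> (P *\<^sub>v x)
        - (transpose_mat (A + B * K) *\<^sub>v x) \<bullet> (P *\<^sub>v (transpose_mat (A + B * K) *\<^sub>v x))"
    and S: "S \<in> carrier_mat m m"
    and Sb: "\<And>u. u \<in> carrier_vec m \<Longrightarrow>
        (transpose_mat K *\<^sub>v (V *\<^sub>v u)) \<bullet> (P *\<^sub>v (transpose_mat K *\<^sub>v (V *\<^sub>v u))) \<le> u \<bullet> (S *\<^sub>v u)"
    and stab: "schur_stable (A + B * K)"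
    and tr: "mtrace (Q * P) + mtrace S \<le> J"
  shows "lqr_cost n A B Q R K \<le> ereal J"
proof -
  define Mc where "Mc = A + B * K"
  have Mc: "Mc \<in> carrier_mat n n" unfolding Mc_def using A B K by simp
  define C where "C = V * K"
  have C: "C \<in> carrier_mat m n" unfolding C_def using V K by simp
  define Q2 where "Q2 = transpose_mat C * C"
  have Q2: "Q2 \<in> carrier_mat n n" unfolding Q2_def using C by simp
  have Q2q: "x \<bullet> (Q2 *\<^sub>v x) = (C *\<^sub>v x) \<bullet> (C *\<^sub>v x)" if x: "x \<in> carrier_vec n" for x
  proof -
    have Cx: "C *\<^sub>v x \<in> carrier_vec m" using C x by simp
    have "Q2 *\<^sub>v x = transpose_mat C *\<^sub>v (C *\<^sub>v x)" unfolding Q2_def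
      by (rule assoc_mult_mat_vec[of _ n m]) (use C x in auto)
    then have "x \<bullet> (Q2 *\<^sub>v x) = x \<bullet> (transpose_mat C *\<^sub>v (C *\<^sub>v x))" by simp
    also have "\<dots> = (transpose_mat C *\<^sub>v (C *\<^sub>v x)) \<bullet> x"
      by (rule comm_scalar_prod[of _ n]) (use C Cx x in auto)
    also have "\<dots> = (C *\<^sub>v x) \<bullet> (C *\<^sub>v x)" by (rule transpose_vec_mult_scalar[OF C x Cx])
    finally show ?thesis .
  qed
  have sqnn: "0 \<le> v \<bullet> v" for v :: "real vec"
    unfolding scalar_prod_def by (rule sum_nonneg) simp
  have Q2psd: "0 \<le> x \<bullet> (Q2 *\<^sub>v x)" if x: "x \<in> carrier_vec n" for x
    using Q2q[OF x] sqnn[of "C *\<^sub>v x"] by simp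
  define f where "f = (\<lambda>i t. let x = Mc ^\<^sub>m t *\<^sub>v unit_vec n i; u = K *\<^sub>v x
                             in x \<bullet> (Q *\<^sub>v x) + u \<bullet> (R *\<^sub>v u))"
  have xit: "Mc ^\<^sub>m t *\<^sub>v unit_vec n i \<in> carrier_vec n" for t i
    using pow_carrier_mat[OF Mc, of t] by simp
  have fval: "f i t = (Mc ^\<^sub>m t *\<^sub>v unit_vec n i) \<bullet> (Q *\<^sub>v (Mc ^\<^sub>m t *\<^sub>v unit_vec n i))
      + (Mc ^\<^sub>m t *\<^sub>v unit_vec n i) \<bullet> (Q2 *\<^sub>v (Mc ^\<^sub>m t *\<^sub>v unit_vec n i))" for i t
  proof -
    define x where "x = Mc ^\<^sub>m t *\<^sub>v unit_vec n i"
    have x: "x \<in> carrier_vec n" unfolding x_def by (rule xit)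
    have u: "K *\<^sub>v x \<in> carrier_vec m" using K x by simp
    have Vu: "V *\<^sub>v (K *\<^sub>v x) \<in> carrier_vec m" using V u by simp
    have "(K *\<^sub>v x) \<bullet> (R *\<^sub>v (K *\<^sub>v x)) = (K *\<^sub>v x) \<bullet> (V *\<^sub>v (V *\<^sub>v (K *\<^sub>v x)))"
      unfolding VR[symmetric] using assoc_mult_mat_vec[OF V V u] by simp
    also have "\<dots> = (transpose_mat V *\<^sub>v (K *\<^sub>v x)) \<bullet> (V *\<^sub>v (K *\<^sub>v x))"
      by (rule transpose_vec_mult_scalar[OF V Vu u, symmetric])
    also have "\<dots> = (C *\<^sub>v x) \<bullet> (C *\<^sub>v x)" unfolding Vs C_def using assoc_mult_mat_vec[OF V K x] by simp
    also have "\<dots> = x \<bullet> (Q2 *\<^sub>v x)" using Q2q[OF x] by simp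
    finally show ?thesis unfolding f_def x_def[symmetric] Let_def by simp
  qed
  have fnn: "0 \<le> f i t" for i t unfolding fval using Qpsd[OF xit] Q2psd[OF xit] by simp
  have lyap': "\<And>x. x \<in> carrier_vec n \<Longrightarrow> x \<bullet> x \<le> x \<bullet> (P *\<^sub>v x)
        - (transpose_mat Mc *\<^sub>v x) \<bullet> (P *\<^sub>v (transpose_mat Mc *\<^sub>v x))" using lyap unfolding Mc_def .
  have bQ: "(\<Sum>t<N. \<Sum>i<n. (Mc ^\<^sub>m t *\<^sub>v unit_vec n i) \<bullet> (Q *\<^sub>v (Mc ^\<^sub>m t *\<^sub>v unit_vec n i))) \<le> mtrace (Q * P)" for N
    unfolding mtrace_mult[OF Q P] by (rule cost_part[OF Mc P Ps Ppsd lyap' Q Qpsd])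
  have trQ2: "(\<Sum>k<n. \<Sum>l<n. Q2 $$ (k,l) * P $$ (l,k)) \<le> mtrace S"
  proof -
    define c where "c = (\<lambda>r. transpose_mat K *\<^sub>v (V *\<^sub>v unit_vec m r))"
    have c: "c r \<in> carrier_vec n" for r unfolding c_def using K V by simp
    have cent: "c r $ k = C $$ (r,k)" if r: "r < m" and k: "k < n" for r k
    proof -
      have Ve: "V *\<^sub>v unit_vec m r \<in> carrier_vec m" using V by simp
      have "c r $ k = (\<Sum>s<m. transpose_mat K $$ (k,s) * (V *\<^sub>v unit_vec m r) $ s)"
        unfolding c_def by (rule mat_vec_index_sum[of _ n m]) (use K Ve k in auto)
      also have "\<dots> = (\<Sum>s<m. V $$ (r,s) * K $$ (s,k))"
      proof (rule sum.cong[OF refl])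
        fix s assume "s \<in> {..<m}"
        hence s: "s < m" by simp
        have "(V *\<^sub>v unit_vec m r) $ s = V $$ (s,r)" by (rule mv_unit_index[OF V r s])
        also have "\<dots> = V $$ (r,s)" using Vs V r s by (metis carrier_matD index_transpose_mat(1))
        finally show "transpose_mat K $$ (k,s) * (V *\<^sub>v unit_vec m r) $ s = V $$ (r,s) * K $$ (s,k)"
          using K k s by simp
      qed
      also have "\<dots> = C $$ (r,k)" unfolding C_def using V K r k
        by (simp add: scalar_prod_def lessThan_atLeast0)
      finally show ?thesis .
    qed
    have "(\<Sum>k<n. \<Sum>l<n. Q2 $$ (k,l) * P $$ (l,k)) = (\<Sum>k<n. \<Sum>l<n. \<Sum>r<m. C $$ (r,k) * P $$ (k,l) * C $$ (r,l))"
    proof (rule sum.cong[OF refl], rule sum.cong[OF refl])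
      fix k l assume "k \<in> {..<n}" "l \<in> {..<n}"
      hence k: "k < n" and l: "l < n" by auto
      have "P $$ (l,k) = P $$ (k,l)" using Ps P k l by (metis carrier_matD index_transpose_mat(1))
      moreover have "Q2 $$ (k,l) = (\<Sum>r<m. C $$ (r,k) * C $$ (r,l))"
        unfolding Q2_def using C k l by (simp add: scalar_prod_def lessThan_atLeast0)
      ultimately show "Q2 $$ (k,l) * P $$ (l,k) = (\<Sum>r<m. C $$ (r,k) * P $$ (k,l) * C $$ (r,l))"
        by (simp add: sum_distrib_left sum_distrib_right mult.commute mult.left_commute)
    qed
    also have "\<dots> = (\<Sum>r<m. \<Sum>k<n. \<Sum>l<n. C $$ (r,k) * P $$ (k,l) * C $$ (r,l))"
    proof -
      have "(\<Sum>k<n. \<Sum>l<n. \<Sum>r<m. C $$ (r,k) * P $$ (k,l) * C $$ (r,l)) =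
            (\<Sum>k<n. \<Sum>r<m. \<Sum>l<n. C $$ (r,k) * P $$ (k,l) * C $$ (r,l))"
        by (rule sum.cong[OF refl], rule sum.swap)
      also have "\<dots> = (\<Sum>r<m. \<Sum>k<n. \<Sum>l<n. C $$ (r,k) * P $$ (k,l) * C $$ (r,l))" by (rule sum.swap)
      finally show ?thesis .
    qed
    also have "\<dots> = (\<Sum>r<m. c r \<bullet> (P *\<^sub>v c r))"
    proof (rule sum.cong[OF refl])
      fix r assume "r \<in> {..<m}"
      hence r: "r < m" by simp
      have "c r \<bullet> (P *\<^sub>v c r) = (\<Sum>k<n. \<Sum>l<n. c r $ k * P $$ (k,l) * c r $ l)" by (rule qf_sum[OF P c c])
      also have "\<dots> = (\<Sum>k<n. \<Sum>l<n. C $$ (r,k) * P $$ (k,l) * C $$ (r,l))" using cent[OF r] by simp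
      finally show "(\<Sum>k<n. \<Sum>l<n. C $$ (r,k) * P $$ (k,l) * C $$ (r,l)) = c r \<bullet> (P *\<^sub>v c r)" by simp
    qed
    also have "\<dots> \<le> (\<Sum>r<m. S $$ (r,r))"
    proof (rule sum_mono)
      fix r assume "r \<in> {..<m}"
      hence r: "r < m" by simp
      have e: "unit_vec m r \<in> carrier_vec m" by simp
      have "c r \<bullet> (P *\<^sub>v c r) \<le> unit_vec m r \<bullet> (S *\<^sub>v unit_vec m r)" unfolding c_def by (rule Sb[OF e])
      also have "\<dots> = (S *\<^sub>v unit_vec m r) $ r" by (rule scalar_prod_left_unit) (use S r in auto)
      also have "\<dots> = S $$ (r,r)" by (rule mv_unit_index[OF S r r])
      finally show "c r \<bullet> (P *\<^sub>v c r) \<le> S $$ (r,r)" .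
    qed
    also have "\<dots> = mtrace S" unfolding mtrace_def using S by simp
    finally show ?thesis .
  qed
  have bQ2: "(\<Sum>t<N. \<Sum>i<n. (Mc ^\<^sub>m t *\<^sub>v unit_vec n i) \<bullet> (Q2 *\<^sub>v (Mc ^\<^sub>m t *\<^sub>v unit_vec n i))) \<le> mtrace S" for N
    using cost_part[OF Mc P Ps Ppsd lyap' Q2 Q2psd, of N] trQ2 by linarith
  have partial: "(\<Sum>t<N. \<Sum>i<n. f i t) \<le> J" for N
  proof -
    have "(\<Sum>t<N. \<Sum>i<n. f i t) =
       (\<Sum>t<N. \<Sum>i<n. (Mc ^\<^sub>m t *\<^sub>v unit_vec n i) \<bullet> (Q *\<^sub>v (Mc ^\<^sub>m t *\<^sub>v unit_vec n i)))
     + (\<Sum>t<N. \<Sum>i<n. (Mc ^\<^sub>m t *\<^sub>v unit_vec n i) \<bullet> (Q2 *\<^sub>v (Mc ^\<^sub>m t *\<^sub>v unit_vec n i)))"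
      unfolding fval by (simp add: sum.distrib)
    then show ?thesis using bQ[of N] bQ2[of N] tr by linarith
  qed
  have summ: "summable (f i)" if i: "i \<in> {..<n}" for i
  proof (rule summableI_nonneg_bounded[where x = J])
    show "0 \<le> f i t" for t by (rule fnn)
    fix N
    have "(\<Sum>t<N. f i t) \<le> (\<Sum>t<N. \<Sum>j<n. f j t)"
      by (rule sum_mono, rule member_le_sum) (use i fnn in auto)
    also have "\<dots> \<le> J" by (rule partial)
    finally show "(\<Sum>t<N. f i t) \<le> J" .
  qed
  have "(\<Sum>i<n. suminf (f i)) = (\<Sum>t. \<Sum>i<n. f i t)" by (rule suminf_sum[symmetric]) (use summ in auto)
  also have "\<dots> \<le> J"
  proof (rule suminf_le_const)
    show "summable (\<lambda>t. \<Sum>i<n. f i t)" by (rule summable_sum) (use summ in auto)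
    fix N show "(\<Sum>t<N. \<Sum>i<n. f i t) \<le> J" by (rule partial)
  qed
  finally have fin: "(\<Sum>i<n. suminf (f i)) \<le> J" .
  have "lqr_cost n A B Q R K = ereal (\<Sum>i<n. suminf (f i))"
    unfolding lqr_cost_def f_def Mc_def using stab by simp
  then show ?thesis using fin by simp
qed


lemma pos_sp:
  fixes v :: "real vec"
  assumes v: "v \<in> carrier_vec n" and v0: "v \<noteq> 0\<^sub>v n"
  shows "0 < v \<bullet> v"
proof -
  obtain i where i: "i < n" and vi: "v $ i \<noteq> 0"
    using v v0 by (metis dim_vec eq_vecI index_zero_vec(1) index_zero_vec(2) carrier_vecD)
  have "0 < (v $ i)^2" using vi by simp
  also have "\<dots> \<le> (\<Sum>j<n. (v $ j)^2)" by (rule member_le_sum) (use i in auto)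
  also have "\<dots> = v \<bullet> v" using v by (simp add: scalar_prod_def lessThan_atLeast0 power2_eq_square)
  finally show ?thesis .
qed

lemma max_norm_entries:
  fixes D :: "real mat"
  assumes D: "D \<in> carrier_mat r c" and mn: "max_norm D \<le> eps"
  shows "\<forall>i<r. \<forall>j<c. \<bar>D $$ (i,j)\<bar> \<le> eps"
proof (intro allI impI)
  fix i j assume i: "i < r" and j: "j < c"
  let ?S = "{\<bar>D $$ (i,j)\<bar> | i j. i < dim_row D \<and> j < dim_col D}"
  have "?S = (\<lambda>(i,j). \<bar>D $$ (i,j)\<bar>) ` ({..<dim_row D} \<times> {..<dim_col D})" by auto
  hence fin: "finite (insert 0 ?S)" by simp
  have "\<bar>D $$ (i,j)\<bar> \<in> insert 0 ?S" using i j D by auto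
  hence "\<bar>D $$ (i,j)\<bar> \<le> Max (insert 0 ?S)" using fin by (rule Max_ge[rotated])
  then show "\<bar>D $$ (i,j)\<bar> \<le> eps" using mn unfolding max_norm_def by simp
qed

theorem proposition7:
  fixes n m T :: nat
    and A B Q R V X U Z \<Delta> L S :: "real mat"
    and eps J_LQR \<alpha> \<beta> :: real
  assumes n_pos: "0 < n"
    and A: "A \<in> carrier_mat n n" and B: "B \<in> carrier_mat n m"
    and X: "X \<in> carrier_mat n T" and U: "U \<in> carrier_mat m T"
    and Z: "Z = A * X + B * U"
    and Delta: "\<Delta> \<in> carrier_mat (2*n+m) T"
    and eps: "eps > 0" and J: "J_LQR > 0"
    and Q: "Q \<in> carrier_mat n n" "psd Q"
    and R: "R \<in> carrier_mat m m" "pd R"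
    and V: "V \<in> carrier_mat m m" "pd V" "V * V = R"
    and feas: "RS_feasible n m T Q V eps J_LQR (vcat Z (vcat X U) + \<Delta>) L S \<alpha> \<beta>"
  shows "(\<Delta> = 0\<^sub>m (2*n+m) T \<longrightarrow>
            lqr_cost n A B Q R (F_K n m L (vcat Z (vcat X U) + \<Delta>)) \<le> ereal J_LQR)
       \<and> (max_norm \<Delta> \<le> eps \<longrightarrow>
            schur_stable (A + B * F_K n m L (vcat Z (vcat X U) + \<Delta>)))"
proof -
  define DD where "DD = vcat Z (vcat X U) + \<Delta>"
  have L: "L \<in> carrier_mat T n" and S: "S \<in> carrier_mat m m"
    and trF: "mtrace (Q * Xd n m DD * L) + mtrace S \<le> J_LQR"
    and psdF: "psd (F_mat n m V L S DD)"
    and rob: "psd (robust_mat n m L \<beta> DD - \<alpha> \<cdot>\<^sub>m N_mat n m T eps DD)"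
    and al: "\<alpha> \<ge> 0" and be: "\<beta> \<ge> 1"
    using feas unfolding RS_feasible_def DD_def by auto
  have Zc: "Z \<in> carrier_mat n T" using Z A B X U by auto
  have DDc: "DD \<in> carrier_mat (2*n+m) T" unfolding DD_def using Zc X U Delta
    by (metis add_carrier_mat mult_2 vcat_carrier add.assoc)
  define Zh where "Zh = Zd n m DD"
  define Xh where "Xh = Xd n m DD"
  define Uh where "Uh = Ud n m DD"
  have Zh: "Zh \<in> carrier_mat n T" and Xh: "Xh \<in> carrier_mat n T" and Uh: "Uh \<in> carrier_mat m T"
    unfolding Zh_def Xh_def Uh_def using DDc Zd_carrier Xd_carrier Ud_carrier by auto
  define P where "P = Xh * L"
  have P: "P \<in> carrier_mat n n" unfolding P_def using Xh L by simp
  define G where "G = V * Uh * L"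
  have G: "G \<in> carrier_mat m n" unfolding G_def using V Uh L by simp
  have ZL: "Zh * L \<in> carrier_mat n n" using Zh L by simp
  define M1 where "M1 = four_block_mat S G (transpose_mat G) P"
  define M2 where "M2 = four_block_mat (P - 1\<^sub>m n) (Zh * L) (transpose_mat (Zh * L)) P"
  have M1: "M1 \<in> carrier_mat (m+n) (m+n)" unfolding M1_def using S G P by simp
  have Pm1: "P - 1\<^sub>m n \<in> carrier_mat n n" by (rule minus_carrier_mat) simp
  have M2: "M2 \<in> carrier_mat (n+n) (n+n)" unfolding M2_def by (rule four_block_carrier_mat[OF Pm1 P])
  have Feq: "F_mat n m V L S DD = four_block_mat M1 (0\<^sub>m (m+n) (n+n)) (0\<^sub>m (n+n) (m+n)) M2"
    unfolding F_mat_def Let_def bdiag_def Zh_def[symmetric] Xh_def[symmetric] Uh_def[symmetric]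
      P_def[symmetric] G_def[symmetric] M1_def[symmetric] M2_def[symmetric] using M1 M2 by simp
  have psdM1: "psd M1" and psdM2: "psd M2"
    using psd_fb(5,6)[OF psdF[unfolded Feq] M1 zero_carrier_mat zero_carrier_mat M2] by auto
  have q1: "\<And>u v. u \<in> carrier_vec m \<Longrightarrow> v \<in> carrier_vec n \<Longrightarrow>
      0 \<le> u \<bullet> (S *\<^sub>v u) + u \<bullet> (G *\<^sub>v v) + v \<bullet> (transpose_mat G *\<^sub>v u) + v \<bullet> (P *\<^sub>v v)"
    using psd_fb(1)[OF psdM1[unfolded M1_def] S G _ P] G by auto
  have PS: "transpose_mat P = P" using psd_fb(3)[OF psdM1[unfolded M1_def] S G _ P] G by auto
  have psdPm1: "psd (P - 1\<^sub>m n)" using psd_fb(5)[OF psdM2[unfolded M2_def] Pm1 ZL _ P] ZL by auto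
  have Pge: "x \<bullet> x \<le> x \<bullet> (P *\<^sub>v x)" if x: "x \<in> carrier_vec n" for x
  proof -
    have "0 \<le> x \<bullet> ((P - 1\<^sub>m n) *\<^sub>v x)" using psdPm1 x Pm1 unfolding psd_def by auto
    also have "(P - 1\<^sub>m n) *\<^sub>v x = P *\<^sub>v x - x" using P x by (simp add: minus_mult_distrib_mat_vec[of _ n n])
    also have "x \<bullet> (P *\<^sub>v x - x) = x \<bullet> (P *\<^sub>v x) - x \<bullet> x"
      by (rule scalar_prod_minus_distrib[of _ n]) (use P x in auto)
    finally show ?thesis by simp
  qed
  have sqnn: "0 \<le> v \<bullet> v" for v :: "real vec" unfolding scalar_prod_def by (rule sum_nonneg) simp
  have Ppsd: "0 \<le> x \<bullet> (P *\<^sub>v x)" if x: "x \<in> carrier_vec n" for x using Pge[OF x] sqnn[of x] by simp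
  have detP: "det P \<noteq> 0"
  proof
    assume "det P = 0"
    then obtain v where v: "v \<in> carrier_vec n" and v0: "v \<noteq> 0\<^sub>v n" and Pv: "P *\<^sub>v v = 0\<^sub>v n"
      using det_0_iff_vec_prod_zero[OF P] by auto
    have "v \<bullet> v \<le> 0" using Pge[OF v] Pv v by simp
    with pos_sp[OF v v0] show False by simp
  qed
  have unit: "P \<in> Units (ring_mat TYPE(real) n undefined)" by (rule det_non_zero_imp_unit[OF P detP])
  obtain Pinv where mi: "mat_inverse P = Some Pinv"
    using mat_inverse(1)[OF P, of undefined] unit by (cases "mat_inverse P") auto
  have Pinv: "Pinv \<in> carrier_mat n n" and PiP: "Pinv * P = 1\<^sub>m n" using mat_inverse(2)[OF P mi] by auto
  have minvP: "minv P = Pinv" unfolding minv_def mi by simp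
  define K where "K = Uh * L * Pinv"
  have Kc: "K \<in> carrier_mat m n" unfolding K_def using Uh L Pinv by simp
  have FK: "F_K n m L DD = K" unfolding F_K_def K_def Uh_def Xh_def[symmetric] P_def[symmetric] minvP ..
  have lyap_gen: "x \<bullet> x \<le> x \<bullet> (P *\<^sub>v x) - (transpose_mat (A + B * K) *\<^sub>v x) \<bullet> (P *\<^sub>v (transpose_mat (A + B * K) *\<^sub>v x))"
    if Dle: "\<forall>i<2*n+m. \<forall>j<T. \<bar>\<Delta> $$ (i,j)\<bar> \<le> eps" and x: "x \<in> carrier_vec n" for x
    using robust_lyap[OF A B X U Z Delta Dle DD_def L rob al be PS[unfolded P_def Xh_def] Pinv
        PiP[unfolded P_def Xh_def] x]
    unfolding K_def Uh_def P_def Xh_def .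
  have stab_gen: "schur_stable (A + B * K)" if Dle: "\<forall>i<2*n+m. \<forall>j<T. \<bar>\<Delta> $$ (i,j)\<bar> \<le> eps"
  proof -
    have Mc: "A + B * K \<in> carrier_mat n n" using A B Kc by simp
    show ?thesis unfolding schur_stable_def
      by (rule lyap_rho[OF n_pos Mc P PS Ppsd lyap_gen[OF Dle]])
  qed
  have part2: "max_norm \<Delta> \<le> eps \<longrightarrow> schur_stable (A + B * F_K n m L DD)"
    using stab_gen max_norm_entries[OF Delta] unfolding FK by blast
  have part1: "\<Delta> = 0\<^sub>m (2*n+m) T \<longrightarrow> lqr_cost n A B Q R (F_K n m L DD) \<le> ereal J_LQR"
  proof
    assume D0: "\<Delta> = 0\<^sub>m (2*n+m) T"
    have Dle: "\<forall>i<2*n+m. \<forall>j<T. \<bar>\<Delta> $$ (i,j)\<bar> \<le> eps" using D0 eps by simp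
    have Qpsd: "0 \<le> x \<bullet> (Q *\<^sub>v x)" if x: "x \<in> carrier_vec n" for x
      using Q x unfolding psd_def by auto
    have Vs: "transpose_mat V = V" using V(2) unfolding pd_def by auto
    have KP: "K * P = Uh * L"
    proof -
      have "K * P = Uh * L * (Pinv * P)" unfolding K_def by (rule assoc_mult_mat) (use Uh L Pinv P in auto)
      then show ?thesis using PiP Uh L by simp
    qed
    have Gv: "G *\<^sub>v v = V *\<^sub>v (K *\<^sub>v (P *\<^sub>v v))" if v: "v \<in> carrier_vec n" for v
    proof -
      have "G = V * (K * P)" unfolding G_def KP by (rule assoc_mult_mat) (use V Uh L in auto)
      then show ?thesis using V Kc P v
        by (simp add: assoc_mult_mat_vec[of _ m m _ n] assoc_mult_mat_vec[of _ m n _ n])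
    qed
    have Sb: "(transpose_mat K *\<^sub>v (V *\<^sub>v u)) \<bullet> (P *\<^sub>v (transpose_mat K *\<^sub>v (V *\<^sub>v u))) \<le> u \<bullet> (S *\<^sub>v u)"
      if u: "u \<in> carrier_vec m" for u
    proof -
      define c where "c = transpose_mat K *\<^sub>v (V *\<^sub>v u)"
      have c: "c \<in> carrier_vec n" unfolding c_def using Kc V u by simp
      define v where "v = (-1::real) \<cdot>\<^sub>v c"
      have v: "v \<in> carrier_vec n" unfolding v_def using c by simp
      have uGw: "u \<bullet> (G *\<^sub>v w) = c \<bullet> (P *\<^sub>v w)" if w: "w \<in> carrier_vec n" for w
      proof -
        have Pw: "P *\<^sub>v w \<in> carrier_vec n" using P w by simp
        have KPw: "K *\<^sub>v (P *\<^sub>v w) \<in> carrier_vec m" using Kc Pw by simp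
        have "u \<bullet> (G *\<^sub>v w) = u \<bullet> (V *\<^sub>v (K *\<^sub>v (P *\<^sub>v w)))" using Gv[OF w] by simp
        also have "\<dots> = (transpose_mat V *\<^sub>v u) \<bullet> (K *\<^sub>v (P *\<^sub>v w))"
          by (rule transpose_vec_mult_scalar[OF V(1) KPw u, symmetric])
        also have "\<dots> = (transpose_mat K *\<^sub>v (V *\<^sub>v u)) \<bullet> (P *\<^sub>v w)"
          unfolding Vs by (rule transpose_vec_mult_scalar[OF Kc Pw, symmetric]) (use V u in simp)
        finally show ?thesis unfolding c_def .
      qed
      have t2: "u \<bullet> (G *\<^sub>v v) = - (c \<bullet> (P *\<^sub>v c))"
        using uGw[OF v] P c unfolding v_def by (simp add: mult_mat_vec[of _ n n] scalar_prod_smult_distrib[of _ n])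
      have t3: "v \<bullet> (transpose_mat G *\<^sub>v u) = u \<bullet> (G *\<^sub>v v)"
      proof -
        have "(transpose_mat G *\<^sub>v u) \<bullet> v = u \<bullet> (G *\<^sub>v v)" by (rule transpose_vec_mult_scalar[OF G v u])
        moreover have "v \<bullet> (transpose_mat G *\<^sub>v u) = (transpose_mat G *\<^sub>v u) \<bullet> v"
          by (rule comm_scalar_prod[of _ n]) (use v G u in auto)
        ultimately show ?thesis by simp
      qed
      have t4: "v \<bullet> (P *\<^sub>v v) = c \<bullet> (P *\<^sub>v c)" unfolding v_def using P c
        by (simp add: mult_mat_vec[of _ n n] scalar_prod_smult_distrib[of _ n] smult_scalar_prod_distrib[of _ n])
      have "0 \<le> u \<bullet> (S *\<^sub>v u) + u \<bullet> (G *\<^sub>v v) + v \<bullet> (transpose_mat G *\<^sub>v u) + v \<bullet> (P *\<^sub>v v)"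
        by (rule q1[OF u v])
      then show ?thesis unfolding t3 t2 t4 c_def[symmetric] by simp
    qed
    have tr: "mtrace (Q * P) + mtrace S \<le> J_LQR"
    proof -
      have "Q * Xd n m DD * L = Q * P" unfolding P_def Xh_def by (rule assoc_mult_mat) (use Q Xh L in \<open>auto simp: Xh_def\<close>)
      then show ?thesis using trF by simp
    qed
    show "lqr_cost n A B Q R (F_K n m L DD) \<le> ereal J_LQR" unfolding FK
      by (rule cost_final[OF A B Kc Q(1) Qpsd V(1) Vs V(3) P PS Ppsd lyap_gen[OF Dle] S Sb stab_gen[OF Dle] tr])
  qed
  show ?thesis using part1 part2 unfolding DD_def by blast
qed


end
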